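(* Assume the index set is discrete: $\mathcal W=\mathcal W_1\times\cdots\times\mathcal W_d$ with each $\mathcal W_k$ a countable subset of $\mathcal B_k$. For each $k$ let $Q^{(k)}$ be a fixed probability distribution on $\mathcal W_1\times\cdots\times\mathcal W_k$ and let $\gamma_k>0$. Let $C=LMR\sqrt2$ and let $P^\star_{W|S}$ be a conditional distribution (with values in $\mathcal W$) attaining $$\min_{P_{W|S}}\Big\{\mathbb E[L_S(W)]+\frac{C}{\sqrt n}\sum_{k=1}^d\beta_k\gamma_k\,D\big(P_{W_1\dots W_k|S}\,\big\|\,Q^{(k)}\,\big|\,P_S\big)\Big\}.$$ Given $\mu$, let $\widehat w=(\widehat w_1,\dots,\widehat w_d)\in\mathcal W$ achieve the minimum of $L_\mu$ over $\mathcal W$. Then $$\mathrm{risk}(\mu,P^\star_{W|S})\le\inf_{w\in\mathcal W}L_\mu(w)+\frac{C}{\sqrt n}\sum_{k=1}^d\beta_k\Big(\gamma_k\log\frac{1}{Q^{(k)}(\widehat w_1,\dots,\widehat w_k)}+\frac1{4\gamma_k}\Big).$$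
   Context: Setting: $d\ge2$, positive integers $m,\delta_1,\dots,\delta_d$, $\delta_0=m$, $R>0$, $\mathcal X=\{x\in\mathbb R^m:|x|_2\le R\}$, $\mathcal Y$ a set, $\mathsf Z=\mathcal X\times\mathcal Y$. For $1\le j\le d$ fix $M_j\in\mathbb R^{\delta_j\times\delta_{j-1}}$ with spectral norm $\|M_j\|_2>0$ and $\alpha_j>0$, and let $\mathcal B_j=\{\mathbf W\in\mathbb R^{\delta_j\times\delta_{j-1}}:\|\mathbf W-M_j\|_2\le\alpha_j\|M_j\|_2\}$. $\phi$ is a $1$-Lipschitz (Euclidean norm) activation with $\phi(0)=0$, $\phi_o$ is the identity or soft-max, and for $w=(\mathbf W_1,\dots,\mathbf W_d)\in\mathcal B_1\times\cdots\times\mathcal B_d$, $h_w(x)=\phi_o(\mathbf W_d\,\phi(\mathbf W_{d-1}\cdots\phi(\mathbf W_1x)\cdots))$. $M=\prod_j\|M_j\|_2$, $\beta_k=\alpha_k\exp(\sum_{i<k}\alpha_i)$. The loss $\ell:(\mathcal B_1\times\cdots\times\mathcal B_d)\times\mathsf Z\to[0,\infty)$ satisfies $|\ell(w,z)-\ell(w',z)|\le L|h_w(x)-h_{w'}(x)|_2$ for some $L>0$, all $w,w'$ and $z=(x,y)$. $S=(Z_1,\dots,Z_n)$ is i.i.d. from $\mu$ on $\mathsf Z$, $P_S=\mu^{\otimes n}$; an algorithm is a conditional distribution $P_{W|S}$ of $W=(W_1,\dots,W_d)$ given $S$, and $P_{W_1\dots W_k|S}$ is the corresponding conditional law of the first $k$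 components. $L_\mu(w)=\mathbb E_{Z\sim\mu}\ell(w,Z)$, $L_S(w)=\frac1n\sum_i\ell(w,Z_i)$, $\mathrm{risk}(\mu,P_{W|S})=\mathbb E[L_\mu(W)]$ under the joint law $\mu^{\otimes n}P_{W|S}$. Conditional relative entropy: $D(P_{Y|X}\|Q|P_X)=\int D(P_{Y|X=x}\|Q)\,\mathrm dP_X(x)$, where $D$ is relative entropy (KL divergence, natural log). *)

theory Defs
  imports "HOL-Probability.Probability"
begin

text \<open>Vectors in R^k are represented as functions nat => real of which only the
first k coordinates matter; matrices in R^(r x c) as nat => nat => real, zero outside
the index range r x c. A weight tuple (W_1,...,W_d) is a function nat => matrix,
with layer j stored at index j (1 <= j <= d) and the zero matrix elsewhere.\<close>

type_synonym vec = "nat \<Rightarrow> real"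
type_synonym mat = "nat \<Rightarrow> nat \<Rightarrow> real"
type_synonym weights = "nat \<Rightarrow> mat"

definition nn_vnorm :: "nat \<Rightarrow> vec \<Rightarrow> real" where
  "nn_vnorm k x = sqrt (\<Sum>i<k. (x i)\<^sup>2)"

definition nn_mvmul :: "nat \<Rightarrow> nat \<Rightarrow> mat \<Rightarrow> vec \<Rightarrow> vec" where
  "nn_mvmul r c A x = (\<lambda>i. if i < r then (\<Sum>j<c. A i j * x j) else 0)"

definition nn_mats :: "nat \<Rightarrow> nat \<Rightarrow> mat set" where
  "nn_mats r c = {A. \<forall>i j. \<not> (i < r \<and> j < c) \<longrightarrow> A i j = 0}"

definition nn_specnorm :: "nat \<Rightarrow> nat \<Rightarrow> mat \<Rightarrow> real" where
  "nn_specnorm r c A = (SUP x\<in>{x. nn_vnorm c x \<le> 1}. nn_vnorm r (nn_mvmul r c A x))"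

definition nn_ball :: "nat \<Rightarrow> nat \<Rightarrow> mat \<Rightarrow> real \<Rightarrow> mat set" where
  "nn_ball r c Mj a = {W \<in> nn_mats r c. nn_specnorm r c (\<lambda>i j. W i j - Mj i j) \<le> a * nn_specnorm r c Mj}"

definition nn_tuples :: "nat \<Rightarrow> (nat \<Rightarrow> mat set) \<Rightarrow> weights set" where
  "nn_tuples d Ws = {w. (\<forall>k\<in>{1..d}. w k \<in> Ws k) \<and> (\<forall>j. j \<notin> {1..d} \<longrightarrow> w j = (\<lambda>_ _. 0))}"

definition nn_prefix :: "nat \<Rightarrow> weights \<Rightarrow> weights" where
  "nn_prefix k w = (\<lambda>j. if j \<in> {1..k} then w j else (\<lambda>_ _. 0))"

fun nn_hidden :: "(nat \<Rightarrow> nat) \<Rightarrow> (nat \<Rightarrow> vec \<Rightarrow> vec) \<Rightarrow> weights \<Rightarrow> vec \<Rightarrow> nat \<Rightarrow> vec" where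
  "nn_hidden \<delta> \<phi> w x 0 = x"
| "nn_hidden \<delta> \<phi> w x (Suc k) =
     \<phi> (\<delta> (Suc k)) (nn_mvmul (\<delta> (Suc k)) (\<delta> k) (w (Suc k)) (nn_hidden \<delta> \<phi> w x k))"

definition nn_net :: "nat \<Rightarrow> (nat \<Rightarrow> nat) \<Rightarrow> (nat \<Rightarrow> vec \<Rightarrow> vec) \<Rightarrow> (nat \<Rightarrow> vec \<Rightarrow> vec)
    \<Rightarrow> weights \<Rightarrow> vec \<Rightarrow> vec" where
  "nn_net d \<delta> \<phi> \<phi>o w x =
     \<phi>o (\<delta> d) (nn_mvmul (\<delta> d) (\<delta> (d - 1)) (w d) (nn_hidden \<delta> \<phi> w x (d - 1)))"

definition nn_softmax :: "nat \<Rightarrow> vec \<Rightarrow> vec" where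
  "nn_softmax k x = (\<lambda>i. if i < k then exp (x i) / (\<Sum>j<k. exp (x j)) else 0)"

text \<open>Relative entropy (natural log) between discrete distributions, with value +infinity
allowed. Written as the sum over x of q(x) f(p(x)/q(x)) with f(t) = t ln t - t + 1 >= 0,
i.e. sum of p ln(p/q) - p + q, which equals sum of p ln(p/q) since both pmfs have mass 1;
it is +infinity if p is not absolutely continuous w.r.t. q.\<close>
definition KL_pmf :: "'a pmf \<Rightarrow> 'a pmf \<Rightarrow> ennreal" where
  "KL_pmf p q = (\<integral>\<^sup>+ x. (if pmf p x = 0 then ennreal (pmf q x)
       else if pmf q x = 0 then \<infinity>
       else ennreal (pmf p x * ln (pmf p x / pmf q x) - pmf p x + pmf q x)) \<partial>count_space UNIV)"

definition neglog :: "real \<Rightarrow> ennreal" where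
  "neglog q = (if q = 0 then \<infinity> else ennreal (- ln q))"

definition nn_beta :: "(nat \<Rightarrow> real) \<Rightarrow> nat \<Rightarrow> real" where
  "nn_beta \<alpha> k = \<alpha> k * exp (\<Sum>i\<in>{1..<k}. \<alpha> i)"

abbreviation sample_measure :: "'z measure \<Rightarrow> nat \<Rightarrow> (nat \<Rightarrow> 'z) measure" where
  "sample_measure \<mu> n \<equiv> PiM {..<n} (\<lambda>_. \<mu>)"

definition emp_loss :: "(weights \<Rightarrow> 'z \<Rightarrow> real) \<Rightarrow> nat \<Rightarrow> weights \<Rightarrow> (nat \<Rightarrow> 'z) \<Rightarrow> real" where
  "emp_loss lf n w s = (\<Sum>i<n. lf w (s i)) / real n"

definition pop_loss :: "(weights \<Rightarrow> 'z \<Rightarrow> real) \<Rightarrow> 'z measure \<Rightarrow> weights \<Rightarrow> ennreal" where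
  "pop_loss lf \<mu> w = (\<integral>\<^sup>+ z. ennreal (lf w z) \<partial>\<mu>)"

text \<open>Algorithms: Markov kernels from samples to (discrete) distributions on W.\<close>
definition admissible :: "nat \<Rightarrow> (nat \<Rightarrow> mat set) \<Rightarrow> 'z measure \<Rightarrow> nat
    \<Rightarrow> ((nat \<Rightarrow> 'z) \<Rightarrow> weights pmf) \<Rightarrow> bool" where
  "admissible d Ws \<mu> n P \<longleftrightarrow>
     (\<forall>s\<in>space (sample_measure \<mu> n). set_pmf (P s) \<subseteq> nn_tuples d Ws) \<and>
     (\<forall>w. (\<lambda>s. ennreal (pmf (P s) w)) \<in> borel_measurable (sample_measure \<mu> n))"

definition exp_emp_loss :: "(weights \<Rightarrow> 'z \<Rightarrow> real) \<Rightarrow> 'z measure \<Rightarrow> nat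
    \<Rightarrow> ((nat \<Rightarrow> 'z) \<Rightarrow> weights pmf) \<Rightarrow> ennreal" where
  "exp_emp_loss lf \<mu> n P = (\<integral>\<^sup>+ s. (\<integral>\<^sup>+ w. ennreal (emp_loss lf n w s) \<partial>measure_pmf (P s))
       \<partial>sample_measure \<mu> n)"

definition cond_KL :: "'z measure \<Rightarrow> nat \<Rightarrow> nat \<Rightarrow> ((nat \<Rightarrow> 'z) \<Rightarrow> weights pmf)
    \<Rightarrow> weights pmf \<Rightarrow> ennreal" where
  "cond_KL \<mu> n k P Q = (\<integral>\<^sup>+ s. KL_pmf (map_pmf (nn_prefix k) (P s)) Q \<partial>sample_measure \<mu> n)"

definition risk :: "(weights \<Rightarrow> 'z \<Rightarrow> real) \<Rightarrow> 'z measure \<Rightarrow> nat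
    \<Rightarrow> ((nat \<Rightarrow> 'z) \<Rightarrow> weights pmf) \<Rightarrow> ennreal" where
  "risk lf \<mu> n P = (\<integral>\<^sup>+ s. (\<integral>\<^sup>+ w. pop_loss lf \<mu> w \<partial>measure_pmf (P s)) \<partial>sample_measure \<mu> n)"

definition gibbs_objective :: "real \<Rightarrow> nat \<Rightarrow> (nat \<Rightarrow> real) \<Rightarrow> (nat \<Rightarrow> real)
    \<Rightarrow> (nat \<Rightarrow> weights pmf) \<Rightarrow> (weights \<Rightarrow> 'z \<Rightarrow> real) \<Rightarrow> 'z measure \<Rightarrow> nat
    \<Rightarrow> ((nat \<Rightarrow> 'z) \<Rightarrow> weights pmf) \<Rightarrow> ennreal" where
  "gibbs_objective C d \<alpha> \<gamma> Q lf \<mu> n P =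
     exp_emp_loss lf \<mu> n P +
     ennreal (C / sqrt (real n)) *
       (\<Sum>k\<in>{1..d}. ennreal (nn_beta \<alpha> k * \<gamma> k) * cond_KL \<mu> n k P (Q k))"

end

theory Submission
  imports Defs
begin
lemma vnorm_L2: "nn_vnorm k x = L2_set x {..<k}"
  by (simp add: nn_vnorm_def L2_set_def)

lemma vnorm_nonneg: "0 \<le> nn_vnorm k x"
  by (simp add: vnorm_L2)

lemma vnorm_cong: "(\<And>i. i < k \<Longrightarrow> x i = y i) \<Longrightarrow> nn_vnorm k x = nn_vnorm k y"
  unfolding nn_vnorm_def by (intro arg_cong[where f=sqrt] sum.cong) auto

lemma vnorm_triangle: "nn_vnorm k (\<lambda>i. x i + y i) \<le> nn_vnorm k x + nn_vnorm k y"
  unfolding vnorm_L2 by (rule L2_set_triangle_ineq)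

lemma vnorm_scale: "nn_vnorm k (\<lambda>i. c * x i) = \<bar>c\<bar> * nn_vnorm k x"
  unfolding nn_vnorm_def
  by (simp add: power_mult_distrib sum_distrib_left[symmetric] real_sqrt_mult)

lemma vnorm_zero: assumes "nn_vnorm k x = 0" "i < k" shows "x i = 0"
proof -
  have "(\<Sum>i<k. (x i)\<^sup>2) = 0" using assms(1) by (simp add: nn_vnorm_def)
  then have "\<forall>i\<in>{..<k}. (x i)\<^sup>2 = 0" by (subst (asm) sum_nonneg_eq_0_iff) auto
  then show ?thesis using assms(2) by auto
qed

lemma vnorm_zero_vec: "nn_vnorm k (\<lambda>_. 0) = 0"
  by (simp add: nn_vnorm_def)

lemma cs_sum: fixes a x :: "nat \<Rightarrow> real" shows "(\<Sum>j<c. a j * x j)\<^sup>2 \<le> (\<Sum>j<c. (a j)\<^sup>2) * (\<Sum>j<c. (x j)\<^sup>2)"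
proof -
  have "\<bar>\<Sum>j<c. a j * x j\<bar> \<le> (\<Sum>j<c. \<bar>a j\<bar> * \<bar>x j\<bar>)"
    by (rule order_trans[OF sum_abs]) (simp add: abs_mult)
  also have "\<dots> \<le> L2_set a {..<c} * L2_set x {..<c}" by (rule L2_set_mult_ineq)
  finally have "\<bar>\<Sum>j<c. a j * x j\<bar>\<^sup>2 \<le> (L2_set a {..<c} * L2_set x {..<c})\<^sup>2"
    by (intro power_mono) auto
  also have "\<dots> = (\<Sum>j<c. (a j)\<^sup>2) * (\<Sum>j<c. (x j)\<^sup>2)"
    by (simp add: L2_set_def power_mult_distrib sum_nonneg)
  finally show ?thesis by simp
qed

lemma mvmul_frob:
  "nn_vnorm r (nn_mvmul r c A x) \<le> sqrt (\<Sum>i<r. \<Sum>j<c. (A i j)\<^sup>2) * nn_vnorm c x"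
proof -
  have "(\<Sum>i<r. (nn_mvmul r c A x i)\<^sup>2) \<le> (\<Sum>i<r. (\<Sum>j<c. (A i j)\<^sup>2) * (\<Sum>j<c. (x j)\<^sup>2))"
    by (intro sum_mono) (simp add: nn_mvmul_def cs_sum)
  also have "\<dots> = (\<Sum>i<r. \<Sum>j<c. (A i j)\<^sup>2) * (\<Sum>j<c. (x j)\<^sup>2)"
    by (simp add: sum_distrib_right)
  finally show ?thesis
    unfolding nn_vnorm_def by (metis real_sqrt_le_mono real_sqrt_mult)
qed

lemma spec_bdd: "bdd_above ((\<lambda>x. nn_vnorm r (nn_mvmul r c A x)) ` {x. nn_vnorm c x \<le> 1})"
proof (rule bdd_aboveI2)
  fix x assume "x \<in> {x. nn_vnorm c x \<le> 1}"
  then have "nn_vnorm c x \<le> 1" by simp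
  have "nn_vnorm r (nn_mvmul r c A x) \<le> sqrt (\<Sum>i<r. \<Sum>j<c. (A i j)\<^sup>2) * nn_vnorm c x"
    by (rule mvmul_frob)
  also have "\<dots> \<le> sqrt (\<Sum>i<r. \<Sum>j<c. (A i j)\<^sup>2) * 1"
    using \<open>nn_vnorm c x \<le> 1\<close> by (intro mult_left_mono) (auto intro!: sum_nonneg)
  finally show "nn_vnorm r (nn_mvmul r c A x) \<le> sqrt (\<Sum>i<r. \<Sum>j<c. (A i j)\<^sup>2)" by simp
qed

lemma spec_upper: "nn_vnorm c x \<le> 1 \<Longrightarrow> nn_vnorm r (nn_mvmul r c A x) \<le> nn_specnorm r c A"
  unfolding nn_specnorm_def by (rule cSUP_upper[OF _ spec_bdd]) simp

lemma spec_nonneg: "0 \<le> nn_specnorm r c A"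
  by (rule order_trans[OF vnorm_nonneg spec_upper[of c "\<lambda>_. 0"]]) (simp add: vnorm_zero_vec)

lemma mvmul_zero_vec: "(\<And>j. j < c \<Longrightarrow> x j = 0) \<Longrightarrow> nn_mvmul r c A x i = 0"
  by (simp add: nn_mvmul_def)

lemma spec_bound: "nn_vnorm r (nn_mvmul r c A x) \<le> nn_specnorm r c A * nn_vnorm c x"
proof (cases "nn_vnorm c x = 0")
  case True
  then have "nn_mvmul r c A x = (\<lambda>_. 0)" by (intro ext mvmul_zero_vec) (auto intro: vnorm_zero)
  then show ?thesis using True by (simp add: vnorm_zero_vec)
next
  case False
  define t where "t = nn_vnorm c x"
  have t: "t > 0" using False vnorm_nonneg[of c x] by (simp add: t_def)
  have "nn_vnorm c (\<lambda>j. (1/t) * x j) = 1" using t vnorm_scale[of c "1/t" x] by (simp add: t_def)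
  then have "nn_vnorm r (nn_mvmul r c A (\<lambda>j. (1/t) * x j)) \<le> nn_specnorm r c A"
    by (intro spec_upper) simp
  moreover have "nn_mvmul r c A (\<lambda>j. (1/t) * x j) = (\<lambda>i. (1/t) * nn_mvmul r c A x i)"
    by (rule ext) (simp add: nn_mvmul_def sum_divide_distrib)
  moreover have "nn_vnorm r (\<lambda>i. (1/t) * nn_mvmul r c A x i) = (1/t) * nn_vnorm r (nn_mvmul r c A x)"
    using t by (subst vnorm_scale) simp
  ultimately have "(1/t) * nn_vnorm r (nn_mvmul r c A x) \<le> nn_specnorm r c A"
    by simp
  then show ?thesis using t by (simp add: t_def field_simps)
qed

lemma mvmul_diff_mat: "nn_mvmul r c A x i - nn_mvmul r c B x i = nn_mvmul r c (\<lambda>i j. A i j - B i j) x i"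
  by (simp add: nn_mvmul_def sum_subtractf[symmetric] left_diff_distrib)

lemma mvmul_diff_vec: "nn_mvmul r c A x i - nn_mvmul r c A y i = nn_mvmul r c A (\<lambda>j. x j - y j) i"
  by (simp add: nn_mvmul_def sum_subtractf[symmetric] right_diff_distrib)

lemma ball_bound:
  assumes "W \<in> nn_ball r c M a"
  shows "nn_vnorm r (nn_mvmul r c W x) \<le> (1 + a) * nn_specnorm r c M * nn_vnorm c x"
proof -
  have eq: "nn_mvmul r c W x = (\<lambda>i. nn_mvmul r c (\<lambda>i j. W i j - M i j) x i + nn_mvmul r c M x i)"
    using mvmul_diff_mat[of r c W x _ M] by (auto simp: algebra_simps)
  have "nn_vnorm r (nn_mvmul r c W x) \<le> nn_vnorm r (nn_mvmul r c (\<lambda>i j. W i j - M i j) x) + nn_vnorm r (nn_mvmul r c M x)"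
    unfolding eq by (rule vnorm_triangle)
  also have "\<dots> \<le> nn_specnorm r c (\<lambda>i j. W i j - M i j) * nn_vnorm c x + nn_specnorm r c M * nn_vnorm c x"
    by (intro add_mono spec_bound)
  also have "\<dots> \<le> a * nn_specnorm r c M * nn_vnorm c x + nn_specnorm r c M * nn_vnorm c x"
    using assms by (intro add_mono mult_right_mono vnorm_nonneg) (auto simp: nn_ball_def)
  finally show ?thesis by (simp add: algebra_simps)
qed

lemma spec_zero: "nn_specnorm r c (\<lambda>_ _. 0) = 0"
proof -
  have e: "nn_mvmul r c (\<lambda>_ _. 0) x = (\<lambda>_. 0)" for x by (auto simp: nn_mvmul_def)
  have h: "nn_vnorm r (nn_mvmul r c (\<lambda>_ _. 0) x) = 0" for x
    by (simp add: e vnorm_zero_vec)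
  have "(\<lambda>_::nat. 0::real) \<in> {x. nn_vnorm c x \<le> 1}" by (simp add: vnorm_zero_vec)
  then have "(\<lambda>x. nn_vnorm r (nn_mvmul r c (\<lambda>_ _. 0) x)) ` {x. nn_vnorm c x \<le> 1} = {0}"
    by (auto simp: h)
  then show ?thesis unfolding nn_specnorm_def by simp
qed

definition layer_ok :: "(nat \<Rightarrow> nat) \<Rightarrow> weights \<Rightarrow> (nat \<Rightarrow> real) \<Rightarrow> nat \<Rightarrow> bool" where
  "layer_ok \<delta> w A j \<longleftrightarrow> (\<forall>y. nn_vnorm (\<delta> j) (nn_mvmul (\<delta> j) (\<delta> (j - 1)) (w j) y) \<le> A j * nn_vnorm (\<delta> (j - 1)) y)"

lemma phi_bound:
  assumes phi_lip: "\<forall>k x y. nn_vnorm k (\<lambda>i. \<phi> k x i - \<phi> k y i) \<le> nn_vnorm k (\<lambda>i. x i - y i)"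
    and phi0: "\<forall>k. \<forall>i<k. \<phi> k (\<lambda>_. 0) i = 0"
  shows "nn_vnorm k (\<phi> k x) \<le> nn_vnorm k x"
proof -
  have "nn_vnorm k (\<lambda>i. \<phi> k x i - \<phi> k (\<lambda>_. 0) i) \<le> nn_vnorm k (\<lambda>i. x i - 0)"
    using phi_lip by blast
  moreover have "nn_vnorm k (\<lambda>i. \<phi> k x i - \<phi> k (\<lambda>_. 0) i) = nn_vnorm k (\<phi> k x)"
    using phi0 by (intro vnorm_cong) auto
  ultimately show ?thesis by simp
qed

lemma hidden_eq:
  "(\<And>i. i \<in> {1..j} \<Longrightarrow> w i = w' i) \<Longrightarrow> nn_hidden \<delta> \<phi> w x j = nn_hidden \<delta> \<phi> w' x j"
proof (induction j)
  case 0 then show ?case by simp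
next
  case (Suc j)
  then have "nn_hidden \<delta> \<phi> w x j = nn_hidden \<delta> \<phi> w' x j" by auto
  moreover have "w (Suc j) = w' (Suc j)" using Suc.prems by auto
  ultimately show ?case by simp
qed

lemma hidden_bound:
  assumes phi_lip: "\<forall>k x y. nn_vnorm k (\<lambda>i. \<phi> k x i - \<phi> k y i) \<le> nn_vnorm k (\<lambda>i. x i - y i)"
    and phi0: "\<forall>k. \<forall>i<k. \<phi> k (\<lambda>_. 0) i = 0"
    and L: "\<forall>j\<in>{1..K}. layer_ok \<delta> w A j" and A0: "\<forall>j\<in>{1..K}. 0 \<le> A j"
  shows "nn_vnorm (\<delta> K) (nn_hidden \<delta> \<phi> w x K) \<le> (\<Prod>j\<in>{1..K}. A j) * nn_vnorm (\<delta> 0) x"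
  using L A0
proof (induction K)
  case 0 then show ?case by simp
next
  case (Suc K)
  have IH: "nn_vnorm (\<delta> K) (nn_hidden \<delta> \<phi> w x K) \<le> (\<Prod>j\<in>{1..K}. A j) * nn_vnorm (\<delta> 0) x"
    using Suc by auto
  have lo: "layer_ok \<delta> w A (Suc K)" using Suc.prems(1) by simp
  have "nn_vnorm (\<delta> (Suc K)) (nn_hidden \<delta> \<phi> w x (Suc K))
      \<le> nn_vnorm (\<delta> (Suc K)) (nn_mvmul (\<delta> (Suc K)) (\<delta> K) (w (Suc K)) (nn_hidden \<delta> \<phi> w x K))"
    by (simp add: phi_bound[OF phi_lip phi0])
  also have "\<dots> \<le> A (Suc K) * nn_vnorm (\<delta> K) (nn_hidden \<delta> \<phi> w x K)"
    using lo unfolding layer_ok_def by simp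
  also have "\<dots> \<le> A (Suc K) * ((\<Prod>j\<in>{1..K}. A j) * nn_vnorm (\<delta> 0) x)"
    using IH Suc.prems(2) by (intro mult_left_mono) auto
  also have "\<dots> = (\<Prod>j\<in>{1..Suc K}. A j) * nn_vnorm (\<delta> 0) x"
    by (simp add: prod.cl_ivl_Suc)
  finally show ?case .
qed

lemma hidden_diff:
  assumes phi_lip: "\<forall>k x y. nn_vnorm k (\<lambda>i. \<phi> k x i - \<phi> k y i) \<le> nn_vnorm k (\<lambda>i. x i - y i)"
    and phi0: "\<forall>k. \<forall>i<k. \<phi> k (\<lambda>_. 0) i = 0"
    and k1: "1 \<le> k" and kK: "k \<le> K"
    and same: "\<forall>j\<in>{1..K}-{k}. w' j = w j"
    and L: "\<forall>j\<in>{1..K}-{k}. layer_ok \<delta> w A j" and A0: "\<forall>j\<in>{1..K}-{k}. 0 \<le> A j"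
    and D: "\<forall>y. nn_vnorm (\<delta> k) (nn_mvmul (\<delta> k) (\<delta> (k-1)) (\<lambda>a b. w k a b - w' k a b) y) \<le> \<epsilon> * nn_vnorm (\<delta> (k-1)) y"
    and e0: "0 \<le> \<epsilon>"
  shows "nn_vnorm (\<delta> K) (\<lambda>i. nn_hidden \<delta> \<phi> w x K i - nn_hidden \<delta> \<phi> w' x K i)
           \<le> \<epsilon> * (\<Prod>j\<in>{1..K}-{k}. A j) * nn_vnorm (\<delta> 0) x"
  using kK same L A0
proof (induction K rule: dec_induct)
  case base
  obtain k0 where k0: "k = Suc k0" using k1 by (cases k) auto
  have sub: "{1..k}-{k} = {1..k0}" using k0 by auto
  define h where "h = nn_hidden \<delta> \<phi> w x k0"
  have h': "nn_hidden \<delta> \<phi> w' x k0 = h" unfolding h_def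
    using base(1) by (intro hidden_eq) (auto simp: k0)
  have "nn_vnorm (\<delta> k) (\<lambda>i. nn_hidden \<delta> \<phi> w x k i - nn_hidden \<delta> \<phi> w' x k i)
     \<le> nn_vnorm (\<delta> k) (\<lambda>i. nn_mvmul (\<delta> k) (\<delta> k0) (w k) h i - nn_mvmul (\<delta> k) (\<delta> k0) (w' k) h i)"
    using phi_lip by (simp add: k0 h_def[symmetric] h')
  also have "\<dots> = nn_vnorm (\<delta> k) (nn_mvmul (\<delta> k) (\<delta> (k-1)) (\<lambda>a b. w k a b - w' k a b) h)"
    by (simp add: mvmul_diff_mat k0)
  also have "\<dots> \<le> \<epsilon> * nn_vnorm (\<delta> k0) h" using D by (simp add: k0)
  also have "\<dots> \<le> \<epsilon> * ((\<Prod>j\<in>{1..k0}. A j) * nn_vnorm (\<delta> 0) x)"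
    unfolding h_def using base(2,3) sub
    by (intro mult_left_mono hidden_bound[OF phi_lip phi0] e0) auto
  finally show ?case unfolding sub by (simp add: mult.assoc)
next
  case (step n)
  have IH: "nn_vnorm (\<delta> n) (\<lambda>i. nn_hidden \<delta> \<phi> w x n i - nn_hidden \<delta> \<phi> w' x n i)
           \<le> \<epsilon> * (\<Prod>j\<in>{1..n}-{k}. A j) * nn_vnorm (\<delta> 0) x"
    using step.prems by (intro step.IH) auto
  have nk: "Suc n \<noteq> k" using step.hyps by auto
  have ws: "w' (Suc n) = w (Suc n)" using step.prems(1) nk by auto
  have lo: "layer_ok \<delta> w A (Suc n)" using step.prems(2) nk by auto
  have a0: "0 \<le> A (Suc n)" using step.prems(3) nk by auto
  define h where "h = nn_hidden \<delta> \<phi> w x n"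
  define h' where "h' = nn_hidden \<delta> \<phi> w' x n"
  have "nn_vnorm (\<delta> (Suc n)) (\<lambda>i. nn_hidden \<delta> \<phi> w x (Suc n) i - nn_hidden \<delta> \<phi> w' x (Suc n) i)
     \<le> nn_vnorm (\<delta> (Suc n)) (\<lambda>i. nn_mvmul (\<delta> (Suc n)) (\<delta> n) (w (Suc n)) h i - nn_mvmul (\<delta> (Suc n)) (\<delta> n) (w (Suc n)) h' i)"
    using phi_lip by (simp add: h_def h'_def ws)
  also have "\<dots> = nn_vnorm (\<delta> (Suc n)) (nn_mvmul (\<delta> (Suc n)) (\<delta> n) (w (Suc n)) (\<lambda>j. h j - h' j))"
    by (simp add: mvmul_diff_vec)
  also have "\<dots> \<le> A (Suc n) * nn_vnorm (\<delta> n) (\<lambda>j. h j - h' j)"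
    using lo unfolding layer_ok_def by simp
  also have "\<dots> \<le> A (Suc n) * (\<epsilon> * (\<Prod>j\<in>{1..n}-{k}. A j) * nn_vnorm (\<delta> 0) x)"
    using IH a0 unfolding h_def h'_def by (intro mult_left_mono) auto
  also have "\<dots> = \<epsilon> * (\<Prod>j\<in>{1..Suc n}-{k}. A j) * nn_vnorm (\<delta> 0) x"
  proof -
    have eq: "{1..Suc n}-{k} = insert (Suc n) ({1..n}-{k})" using nk by auto
    have dn: "Suc n \<notin> {1..n}-{k}" by auto
    have P: "prod A ({1..Suc n}-{k}) = A (Suc n) * prod A ({1..n}-{k})"
      unfolding eq by (rule prod.insert) (use dn in auto)
    show ?thesis unfolding P by (simp add: mult_ac)
  qed
  finally show ?case .
qed

lemma net_diff:
  assumes phi_lip: "\<forall>k x y. nn_vnorm k (\<lambda>i. \<phi> k x i - \<phi> k y i) \<le> nn_vnorm k (\<lambda>i. x i - y i)"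
    and phi0: "\<forall>k. \<forall>i<k. \<phi> k (\<lambda>_. 0) i = 0"
    and phio_lip: "\<forall>a b. nn_vnorm (\<delta> d) (\<lambda>i. \<phi>o (\<delta> d) a i - \<phi>o (\<delta> d) b i) \<le> nn_vnorm (\<delta> d) (\<lambda>i. a i - b i)"
    and k1: "1 \<le> k" and kd: "k \<le> d"
    and same: "\<forall>j\<in>{1..d}-{k}. w' j = w j"
    and L: "\<forall>j\<in>{1..d}-{k}. layer_ok \<delta> w A j" and A0: "\<forall>j\<in>{1..d}-{k}. 0 \<le> A j"
    and D: "\<forall>y. nn_vnorm (\<delta> k) (nn_mvmul (\<delta> k) (\<delta> (k-1)) (\<lambda>a b. w k a b - w' k a b) y) \<le> \<epsilon> * nn_vnorm (\<delta> (k-1)) y"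
    and e0: "0 \<le> \<epsilon>"
  shows "nn_vnorm (\<delta> d) (\<lambda>i. nn_net d \<delta> \<phi> \<phi>o w x i - nn_net d \<delta> \<phi> \<phi>o w' x i)
           \<le> \<epsilon> * (\<Prod>j\<in>{1..d}-{k}. A j) * nn_vnorm (\<delta> 0) x"
proof (cases "k = d")
  case True
  define h where "h = nn_hidden \<delta> \<phi> w x (d - 1)"
  have h': "nn_hidden \<delta> \<phi> w' x (d - 1) = h" unfolding h_def
    using same True by (intro hidden_eq) auto
  have sub: "{1..d}-{k} = {1..d-1}" using True k1 by auto
  have "nn_vnorm (\<delta> d) (\<lambda>i. nn_net d \<delta> \<phi> \<phi>o w x i - nn_net d \<delta> \<phi> \<phi>o w' x i)
     \<le> nn_vnorm (\<delta> d) (\<lambda>i. nn_mvmul (\<delta> d) (\<delta> (d - 1)) (w d) h i - nn_mvmul (\<delta> d) (\<delta> (d - 1)) (w' d) h i)"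
    unfolding nn_net_def h_def[symmetric] h' using phio_lip by blast
  also have "\<dots> = nn_vnorm (\<delta> d) (nn_mvmul (\<delta> d) (\<delta> (d-1)) (\<lambda>a b. w d a b - w' d a b) h)"
    by (simp add: mvmul_diff_mat)
  also have "\<dots> \<le> \<epsilon> * nn_vnorm (\<delta> (d-1)) h" using D True by simp
  also have "\<dots> \<le> \<epsilon> * ((\<Prod>j\<in>{1..d-1}. A j) * nn_vnorm (\<delta> 0) x)"
    unfolding h_def using L A0 sub
    by (intro mult_left_mono hidden_bound[OF phi_lip phi0] e0) auto
  finally show ?thesis unfolding sub by (simp add: mult.assoc)
next
  case False
  then have kd1: "k \<le> d - 1" using kd by auto
  have dk: "d \<noteq> k" using False by auto
  have subs: "{1..d-1}-{k} \<subseteq> {1..d}-{k}" by auto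
  define h where "h = nn_hidden \<delta> \<phi> w x (d - 1)"
  define h' where "h' = nn_hidden \<delta> \<phi> w' x (d - 1)"
  have HD: "nn_vnorm (\<delta> (d-1)) (\<lambda>i. h i - h' i) \<le> \<epsilon> * (\<Prod>j\<in>{1..d-1}-{k}. A j) * nn_vnorm (\<delta> 0) x"
    unfolding h_def h'_def
    by (rule hidden_diff[where w=w and w'=w' and A=A and \<delta>=\<delta> and \<phi>=\<phi>, OF phi_lip phi0 k1 kd1 _ _ _ D e0])
       (use same L A0 subs in blast)+
  have ws: "w' d = w d" using same dk kd k1 by auto
  have lo: "layer_ok \<delta> w A d" using L dk kd k1 by auto
  have a0: "0 \<le> A d" using A0 dk kd k1 by auto
  have "nn_vnorm (\<delta> d) (\<lambda>i. nn_net d \<delta> \<phi> \<phi>o w x i - nn_net d \<delta> \<phi> \<phi>o w' x i)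
     \<le> nn_vnorm (\<delta> d) (\<lambda>i. nn_mvmul (\<delta> d) (\<delta> (d - 1)) (w d) h i - nn_mvmul (\<delta> d) (\<delta> (d - 1)) (w d) h' i)"
    unfolding nn_net_def h_def h'_def ws using phio_lip by blast
  also have "\<dots> = nn_vnorm (\<delta> d) (nn_mvmul (\<delta> d) (\<delta> (d-1)) (w d) (\<lambda>j. h j - h' j))"
    by (simp add: mvmul_diff_vec)
  also have "\<dots> \<le> A d * nn_vnorm (\<delta> (d-1)) (\<lambda>j. h j - h' j)"
    using lo unfolding layer_ok_def by simp
  also have "\<dots> \<le> A d * (\<epsilon> * (\<Prod>j\<in>{1..d-1}-{k}. A j) * nn_vnorm (\<delta> 0) x)"
    using HD a0 by (intro mult_left_mono) auto
  also have "\<dots> = \<epsilon> * (\<Prod>j\<in>{1..d}-{k}. A j) * nn_vnorm (\<delta> 0) x"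
  proof -
    have eq: "{1..d}-{k} = insert d ({1..d-1}-{k})" using dk kd k1 by auto
    have dn: "d \<notin> {1..d-1}-{k}" using k1 kd by auto
    have P: "prod A ({1..d}-{k}) = A d * prod A ({1..d-1}-{k})"
      unfolding eq by (rule prod.insert) (use dn in auto)
    show ?thesis unfolding P by (simp add: mult_ac)
  qed
  finally show ?thesis .
qed

lemma deriv_e: "((\<lambda>t. exp (a + t * b)) has_real_derivative exp (a + t * b) * b) (at t)"
  by (auto intro!: derivative_eq_intros)

lemma softmax_var_bound:
  fixes p h c :: "nat \<Rightarrow> real"
  assumes p0: "\<And>i. i < K \<Longrightarrow> 0 \<le> p i" and p1: "(\<Sum>i<K. p i) = 1"
  defines "m \<equiv> (\<Sum>j<K. p j * h j)"
  shows "\<bar>\<Sum>i<K. c i * (p i * (h i - m))\<bar> \<le> nn_vnorm K c * nn_vnorm K h"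
proof -
  have ple: "p i \<le> 1" if "i < K" for i
  proof -
    have "p i \<le> (\<Sum>j<K. p j)" using that p0 by (intro member_le_sum) auto
    then show ?thesis using p1 by simp
  qed
  have "\<bar>\<Sum>i<K. c i * (p i * (h i - m))\<bar> \<le> (\<Sum>i<K. \<bar>c i\<bar> * \<bar>p i * (h i - m)\<bar>)"
    by (rule order_trans[OF sum_abs]) (simp add: abs_mult)
  also have "\<dots> \<le> L2_set c {..<K} * L2_set (\<lambda>i. p i * (h i - m)) {..<K}"
    by (rule L2_set_mult_ineq)
  also have "L2_set (\<lambda>i. p i * (h i - m)) {..<K} \<le> nn_vnorm K h"
  proof -
    have "(\<Sum>i<K. (p i * (h i - m))\<^sup>2) \<le> (\<Sum>i<K. p i * (h i - m)\<^sup>2)"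
    proof (intro sum_mono)
      fix i assume "i \<in> {..<K}"
      then have "0 \<le> p i" "p i \<le> 1" using p0 ple by auto
      then have "p i * p i \<le> p i * 1" by (intro mult_left_mono) auto
      have "(p i * (h i - m))\<^sup>2 = (p i * p i) * (h i - m)\<^sup>2"
        by (simp add: power_mult_distrib power2_eq_square)
      also have "\<dots> \<le> (p i * 1) * (h i - m)\<^sup>2"
        using \<open>p i * p i \<le> p i * 1\<close> by (intro mult_right_mono) auto
      finally show "(p i * (h i - m))\<^sup>2 \<le> p i * (h i - m)\<^sup>2" by simp
    qed
    also have "(\<Sum>i<K. p i * (h i - m)\<^sup>2) = (\<Sum>i<K. p i * (h i)\<^sup>2) - 2 * m * (\<Sum>i<K. p i * h i) + m\<^sup>2 * (\<Sum>i<K. p i)"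
      by (simp add: power2_diff algebra_simps sum.distrib sum_subtractf sum_distrib_left sum_distrib_right)
    also have "\<dots> = (\<Sum>i<K. p i * (h i)\<^sup>2) - m\<^sup>2"
      using p1 by (simp add: m_def power2_eq_square)
    also have "\<dots> \<le> (\<Sum>i<K. (h i)\<^sup>2)"
    proof -
      have "(\<Sum>i<K. p i * (h i)\<^sup>2) \<le> (\<Sum>i<K. (h i)\<^sup>2)"
        using ple p0 by (intro sum_mono mult_left_le_one_le) auto
      then show ?thesis using zero_le_power2[of m] by linarith
    qed
    finally show ?thesis unfolding L2_set_def nn_vnorm_def by (rule real_sqrt_le_mono)
  qed
  then have "L2_set c {..<K} * L2_set (\<lambda>i. p i * (h i - m)) {..<K} \<le> L2_set c {..<K} * nn_vnorm K h"
    by (intro mult_left_mono) auto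
  finally show ?thesis by (simp add: vnorm_L2)
qed

lemma softmax_lip: "nn_vnorm K (\<lambda>i. nn_softmax K u i - nn_softmax K v i) \<le> nn_vnorm K (\<lambda>i. u i - v i)"
proof (cases "K = 0")
  case True then show ?thesis by (simp add: nn_vnorm_def)
next
  case False
  define h where "h i = u i - v i" for i
  define c where "c i = nn_softmax K u i - nn_softmax K v i" for i
  define e where "e t i = exp (v i + t * h i)" for t i
  define S where "S t = (\<Sum>j<K. e t j)" for t
  define S' where "S' t = (\<Sum>j<K. e t j * h j)" for t
  define g where "g t = (\<Sum>i<K. c i * (e t i / S t))" for t
  define g' where "g' t = (\<Sum>i<K. c i * ((e t i * h i * S t - e t i * S' t) / (S t * S t)))" for t
  have Spos: "S t > 0" for t
    unfolding S_def e_def using False by (intro sum_pos) auto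
  have dS: "(S has_real_derivative S' t) (at t)" for t
    unfolding S_def S'_def e_def by (intro DERIV_sum deriv_e)
  have dg: "(g has_real_derivative g' t) (at t)" for t
  proof -
    have "((\<lambda>t. c i * (e t i / S t)) has_real_derivative c i * ((e t i * h i * S t - e t i * S' t) / (S t * S t))) (at t)" for i
      using Spos[of t] by (intro DERIV_cmult DERIV_divide dS) (auto simp: e_def intro: deriv_e)
    then show ?thesis unfolding g_def g'_def by (intro DERIV_sum) auto
  qed
  obtain z where "g 1 - g 0 = (1 - 0) * g' z"
    using MVT2[of 0 1 g g'] dg by auto
  then have gz: "g 1 - g 0 = g' z" by simp
  have e1: "e 1 i = exp (u i)" for i by (simp add: e_def h_def)
  have e0: "e 0 i = exp (v i)" for i by (simp add: e_def)
  have "g 1 - g 0 = (\<Sum>i<K. c i * c i)"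
    unfolding g_def S_def e1 e0 by (simp add: c_def nn_softmax_def sum_subtractf[symmetric] right_diff_distrib)
  also have "\<dots> = (nn_vnorm K c)\<^sup>2" by (simp add: nn_vnorm_def power2_eq_square sum_nonneg)
  finally have lhs: "(nn_vnorm K c)\<^sup>2 = g' z" using gz by simp
  define p where "p i = e z i / S z" for i
  have p0: "0 \<le> p i" for i using Spos[of z] by (simp add: p_def e_def)
  have p1: "(\<Sum>i<K. p i) = 1" using Spos[of z] by (simp add: p_def S_def sum_divide_distrib[symmetric])
  have m: "(\<Sum>j<K. p j * h j) = S' z / S z"
    by (simp add: p_def S'_def sum_divide_distrib)
  have "g' z = (\<Sum>i<K. c i * (p i * (h i - (\<Sum>j<K. p j * h j))))"
    unfolding g'_def m using Spos[of z]
    by (intro sum.cong refl) (simp add: p_def field_simps)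
  then have "\<bar>g' z\<bar> \<le> nn_vnorm K c * nn_vnorm K h"
    using softmax_var_bound[of K p, OF p0 p1] by simp
  then have "(nn_vnorm K c)\<^sup>2 \<le> nn_vnorm K c * nn_vnorm K h" using lhs by simp
  then have "nn_vnorm K c \<le> nn_vnorm K h"
    using vnorm_nonneg[of K c] vnorm_nonneg[of K h]
    by (metis less_eq_real_def mult_le_cancel_left_pos power2_eq_square mult_zero_left)
  then show ?thesis unfolding c_def h_def .
qed

lemma phio_lip:
  assumes "\<phi>o = (\<lambda>k x. x) \<or> \<phi>o = nn_softmax"
  shows "nn_vnorm K (\<lambda>i. \<phi>o K a i - \<phi>o K b i) \<le> nn_vnorm K (\<lambda>i. a i - b i)"
  using assms softmax_lip by auto

lemma telescope_ivl: fixes f :: "nat \<Rightarrow> real" and N :: nat shows "(\<Sum>k\<in>{1..N}. f k - f (k - 1)) = f N - (f 0 :: real)"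
  by (induction N) (auto simp: sum.cl_ivl_Suc)

lemma prod_chain:
  fixes s al :: "nat \<Rightarrow> real"
  assumes k: "1 \<le> k" "k \<le> d" and s0: "\<forall>j. 0 \<le> s j" and a0: "\<forall>j\<in>{1..d}. 0 \<le> al j"
  shows "al k * s k * (\<Prod>j\<in>{1..d}-{k}. (if j < k then (1 + al j) * s j else s j))
         \<le> al k * exp (\<Sum>i\<in>{1..<k}. al i) * (\<Prod>j\<in>{1..d}. s j)"
proof -
  have "(\<Prod>j\<in>{1..d}-{k}. (if j < k then (1 + al j) * s j else s j))
      \<le> (\<Prod>j\<in>{1..d}-{k}. exp (if j < k then al j else 0) * s j)"
  proof (intro prod_mono conjI)
    fix j assume j: "j \<in> {1..d}-{k}"
    show "0 \<le> (if j < k then (1 + al j) * s j else s j)" using j s0 a0 by auto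
    have "1 + al j \<le> exp (al j)" by (rule exp_ge_add_one_self)
    then show "(if j < k then (1 + al j) * s j else s j) \<le> exp (if j < k then al j else 0) * s j"
      using s0 by (auto intro: mult_right_mono)
  qed
  also have "\<dots> = exp (\<Sum>j\<in>{1..d}-{k}. (if j < k then al j else 0)) * (\<Prod>j\<in>{1..d}-{k}. s j)"
    by (simp add: prod.distrib exp_sum)
  also have "(\<Sum>j\<in>{1..d}-{k}. (if j < k then al j else 0)) = (\<Sum>i\<in>{1..<k}. al i)"
  proof -
    have "(\<Sum>j\<in>{1..d}-{k}. (if j < k then al j else 0)) = sum al (({1..d}-{k}) \<inter> {j. j < k})"
      by (simp add: sum.If_cases)
    also have "({1..d}-{k}) \<inter> {j. j < k} = {1..<k}" using k by auto
    finally show ?thesis .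
  qed
  finally have P: "(\<Prod>j\<in>{1..d}-{k}. (if j < k then (1 + al j) * s j else s j))
      \<le> exp (\<Sum>i\<in>{1..<k}. al i) * (\<Prod>j\<in>{1..d}-{k}. s j)" .
  have ak: "0 \<le> al k * s k" using a0 s0 k by auto
  have "al k * s k * (\<Prod>j\<in>{1..d}-{k}. (if j < k then (1 + al j) * s j else s j))
     \<le> al k * s k * (exp (\<Sum>i\<in>{1..<k}. al i) * (\<Prod>j\<in>{1..d}-{k}. s j))"
    by (rule mult_left_mono[OF P ak])
  also have "\<dots> = al k * exp (\<Sum>i\<in>{1..<k}. al i) * (s k * (\<Prod>j\<in>{1..d}-{k}. s j))"
    by (simp add: mult_ac)
  also have "s k * (\<Prod>j\<in>{1..d}-{k}. s j) = (\<Prod>j\<in>{1..d}. s j)"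
    using k by (subst prod.remove[of "{1..d}" k]) auto
  finally show ?thesis .
qed

locale nnset =
  fixes d m n :: nat and \<delta> :: "nat \<Rightarrow> nat" and R Lc :: real
    and Mm :: "nat \<Rightarrow> mat" and \<alpha> \<gamma> :: "nat \<Rightarrow> real"
    and \<phi> \<phi>o :: "nat \<Rightarrow> vec \<Rightarrow> vec"
    and lf :: "weights \<Rightarrow> vec \<times> 'y \<Rightarrow> real" and \<mu> :: "(vec \<times> 'y) measure"
    and Ws :: "nat \<Rightarrow> mat set" and Q :: "nat \<Rightarrow> weights pmf"
    and Pstar :: "(nat \<Rightarrow> vec \<times> 'y) \<Rightarrow> weights pmf" and what :: weights
  assumes d2: "d \<ge> 2"
    and dims: "\<forall>j\<in>{1..d}. \<delta> j > 0" and dim0: "\<delta> 0 = m" and mpos: "m > 0"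
    and Rpos: "R > 0"
    and Mj: "\<forall>j\<in>{1..d}. Mm j \<in> nn_mats (\<delta> j) (\<delta> (j - 1))
                \<and> nn_specnorm (\<delta> j) (\<delta> (j - 1)) (Mm j) > 0 \<and> \<alpha> j > 0"
    and phi_lip: "\<forall>k x y. nn_vnorm k (\<lambda>i. \<phi> k x i - \<phi> k y i) \<le> nn_vnorm k (\<lambda>i. x i - y i)"
    and phi0: "\<forall>k. \<forall>i<k. \<phi> k (\<lambda>_. 0) i = 0"
    and phio: "\<phi>o = (\<lambda>k x. x) \<or> \<phi>o = nn_softmax"
    and Lpos: "Lc > 0"
    and loss_nonneg: "\<forall>w z. 0 \<le> lf w z"
    and loss_lip: "\<forall>w\<in>nn_tuples d (\<lambda>j. nn_ball (\<delta> j) (\<delta> (j - 1)) (Mm j) (\<alpha> j)).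
                   \<forall>w'\<in>nn_tuples d (\<lambda>j. nn_ball (\<delta> j) (\<delta> (j - 1)) (Mm j) (\<alpha> j)).
                   \<forall>x y. nn_vnorm m x \<le> R \<longrightarrow>
                     \<bar>lf w (x, y) - lf w' (x, y)\<bar>
                       \<le> Lc * nn_vnorm (\<delta> d) (\<lambda>i. nn_net d \<delta> \<phi> \<phi>o w x i - nn_net d \<delta> \<phi> \<phi>o w' x i)"
    and prob: "prob_space \<mu>"
    and supp: "space \<mu> \<subseteq> {x. nn_vnorm m x \<le> R} \<times> UNIV"
    and loss_meas: "\<forall>w\<in>nn_tuples d (\<lambda>j. nn_ball (\<delta> j) (\<delta> (j - 1)) (Mm j) (\<alpha> j)).
                      (\<lambda>z. lf w z) \<in> borel_measurable \<mu>"
    and npos: "n \<ge> 1"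
    and Ws: "\<forall>k\<in>{1..d}. countable (Ws k) \<and> Ws k \<subseteq> nn_ball (\<delta> k) (\<delta> (k - 1)) (Mm k) (\<alpha> k)"
    and Qsupp: "\<forall>k\<in>{1..d}. set_pmf (Q k) \<subseteq> nn_prefix k ` nn_tuples d Ws"
    and gpos: "\<forall>k\<in>{1..d}. \<gamma> k > 0"
    and Pstar_adm: "admissible d Ws \<mu> n Pstar"
    and Pstar_min: "\<forall>P. admissible d Ws \<mu> n P \<longrightarrow>
        gibbs_objective (Lc * (\<Prod>j\<in>{1..d}. nn_specnorm (\<delta> j) (\<delta> (j - 1)) (Mm j)) * R * sqrt 2)
           d \<alpha> \<gamma> Q lf \<mu> n Pstar
        \<le> gibbs_objective (Lc * (\<Prod>j\<in>{1..d}. nn_specnorm (\<delta> j) (\<delta> (j - 1)) (Mm j)) * R * sqrt 2)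
           d \<alpha> \<gamma> Q lf \<mu> n P"
    and what_in: "what \<in> nn_tuples d Ws"
    and what_min: "\<forall>w\<in>nn_tuples d Ws. pop_loss lf \<mu> what \<le> pop_loss lf \<mu> w"

begin

abbreviation "Tb \<equiv> nn_tuples d (\<lambda>j. nn_ball (\<delta> j) (\<delta> (j - 1)) (Mm j) (\<alpha> j))"
abbreviation "sn j \<equiv> nn_specnorm (\<delta> j) (\<delta> (j - 1)) (Mm j)"
abbreviation "Mp \<equiv> (\<Prod>j\<in>{1..d}. sn j)"

definition ch :: "nat \<Rightarrow> weights \<Rightarrow> weights" where
  "ch k u = (\<lambda>j. if j \<in> {1..k} then u j else if j \<in> {1..d} then Mm j else (\<lambda>_ _. 0))"
definition "M0 = ch 0 (\<lambda>_ _ _. 0)"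
definition "aa k = Lc * (nn_beta \<alpha> k * Mp) * R"
definition "Dl k u z = lf (ch k u) z - lf (ch (k - 1) u) z"
definition "good k u \<longleftrightarrow> (\<forall>j\<in>{1..k}. u j \<in> nn_ball (\<delta> j) (\<delta> (j - 1)) (Mm j) (\<alpha> j))"

lemma sn_pos: "j \<in> {1..d} \<Longrightarrow> 0 < sn j" using Mj by auto
lemma al_pos: "j \<in> {1..d} \<Longrightarrow> 0 < \<alpha> j" using Mj by auto
lemma Mp_pos: "0 < Mp" using sn_pos by (intro prod_pos) auto

lemma beta_pos: "k \<in> {1..d} \<Longrightarrow> 0 < nn_beta \<alpha> k"
  using al_pos by (simp add: nn_beta_def)

lemma aa_pos: "k \<in> {1..d} \<Longrightarrow> 0 < aa k"
  unfolding aa_def using Lpos Rpos beta_pos Mp_pos by simp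

lemma Mm_ball: assumes "j \<in> {1..d}" shows "Mm j \<in> nn_ball (\<delta> j) (\<delta> (j - 1)) (Mm j) (\<alpha> j)"
proof -
  have "0 < sn j" "0 < \<alpha> j" "Mm j \<in> nn_mats (\<delta> j) (\<delta> (j - 1))" using assms Mj by auto
  then show ?thesis by (simp add: nn_ball_def spec_zero)
qed

lemma ch_Tb: assumes "k \<le> d" "good k u" shows "ch k u \<in> Tb"
  using assms Mm_ball by (auto simp: nn_tuples_def ch_def good_def)

lemma ch_d: "w \<in> nn_tuples d X \<Longrightarrow> ch d w = w"
  by (auto simp: ch_def nn_tuples_def fun_eq_iff)

lemma ch_prefix: "k \<le> k' \<Longrightarrow> ch k (nn_prefix k' w) = ch k w"
  by (auto simp: ch_def nn_prefix_def fun_eq_iff)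

lemma ch0: "ch 0 u = M0" by (simp add: ch_def M0_def)

lemma good_T: "w \<in> nn_tuples d Ws \<Longrightarrow> k \<le> d \<Longrightarrow> good k w"
  using Ws by (fastforce simp: good_def nn_tuples_def)

lemma good_Tb: "w \<in> Tb \<Longrightarrow> k \<le> d \<Longrightarrow> good k w"
  by (fastforce simp: good_def nn_tuples_def)

lemma good_prefix: "good k w \<Longrightarrow> good k (nn_prefix k w)"
  by (simp add: good_def nn_prefix_def)

lemma good_mono: "good k w \<Longrightarrow> k' \<le> k \<Longrightarrow> good k' w"
  by (auto simp: good_def)

lemma M0_Tb: "M0 \<in> Tb" using ch_Tb[of 0] by (simp add: ch0 good_def)

lemma net_chain:
  assumes k: "1 \<le> k" "k \<le> d" and g: "good k u" and x: "nn_vnorm m x \<le> R"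
  shows "nn_vnorm (\<delta> d) (\<lambda>i. nn_net d \<delta> \<phi> \<phi>o (ch k u) x i - nn_net d \<delta> \<phi> \<phi>o (ch (k - 1) u) x i)
           \<le> nn_beta \<alpha> k * Mp * R"
proof -
  define A where "A j = (if j < k then (1 + \<alpha> j) * sn j else sn j)" for j
  define \<epsilon> where "\<epsilon> = \<alpha> k * sn k"
  have sn0: "\<And>j. 0 \<le> sn j" by (rule spec_nonneg)
  have kd: "k \<in> {1..d}" using k by auto
  have "nn_vnorm (\<delta> d) (\<lambda>i. nn_net d \<delta> \<phi> \<phi>o (ch k u) x i - nn_net d \<delta> \<phi> \<phi>o (ch (k - 1) u) x i)
      \<le> \<epsilon> * (\<Prod>j\<in>{1..d}-{k}. A j) * nn_vnorm (\<delta> 0) x"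
  proof (rule net_diff[OF phi_lip phi0 _ k])
    show "\<forall>a b. nn_vnorm (\<delta> d) (\<lambda>i. \<phi>o (\<delta> d) a i - \<phi>o (\<delta> d) b i) \<le> nn_vnorm (\<delta> d) (\<lambda>i. a i - b i)"
      using phio_lip[OF phio] by blast
    show "\<forall>j\<in>{1..d}-{k}. ch (k - 1) u j = ch k u j" by (auto simp: ch_def)
    show "\<forall>j\<in>{1..d}-{k}. layer_ok \<delta> (ch k u) A j"
    proof
      fix j assume j: "j \<in> {1..d}-{k}"
      show "layer_ok \<delta> (ch k u) A j"
      proof (cases "j < k")
        case True
        then have "ch k u j = u j" "u j \<in> nn_ball (\<delta> j) (\<delta> (j - 1)) (Mm j) (\<alpha> j)"
          using j g by (auto simp: ch_def good_def)
        then show ?thesis using True unfolding layer_ok_def A_def by (auto intro: ball_bound)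
      next
        case False
        then have "ch k u j = Mm j" using j by (auto simp: ch_def)
        then show ?thesis using False unfolding layer_ok_def A_def by (auto intro: spec_bound)
      qed
    qed
    show "\<forall>j\<in>{1..d}-{k}. 0 \<le> A j"
    proof
      fix j assume j: "j \<in> {1..d}-{k}"
      then have "0 < \<alpha> j" by (intro al_pos) auto
      then show "0 \<le> A j" using sn0[of j] by (simp add: A_def)
    qed
    have uk: "ch k u k = u k" "ch (k - 1) u k = Mm k" using kd by (auto simp: ch_def)
    have "u k \<in> nn_ball (\<delta> k) (\<delta> (k - 1)) (Mm k) (\<alpha> k)" using g k by (auto simp: good_def)
    then have sp: "nn_specnorm (\<delta> k) (\<delta> (k - 1)) (\<lambda>a b. u k a b - Mm k a b) \<le> \<epsilon>"
      by (simp add: nn_ball_def \<epsilon>_def)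
    show "\<forall>y. nn_vnorm (\<delta> k) (nn_mvmul (\<delta> k) (\<delta> (k - 1)) (\<lambda>a b. ch k u k a b - ch (k - 1) u k a b) y)
              \<le> \<epsilon> * nn_vnorm (\<delta> (k - 1)) y"
      unfolding uk by (metis (no_types, lifting) order_trans spec_bound mult_right_mono vnorm_nonneg sp)
    show "0 \<le> \<epsilon>" using al_pos[OF kd] sn0[of k] by (simp add: \<epsilon>_def)
  qed
  also have "\<dots> \<le> (nn_beta \<alpha> k * Mp) * R"
  proof (rule mult_mono)
    show "\<epsilon> * (\<Prod>j\<in>{1..d}-{k}. A j) \<le> nn_beta \<alpha> k * Mp"
      unfolding \<epsilon>_def A_def nn_beta_def
      by (rule prod_chain[OF k]) (use sn0 al_pos in \<open>auto intro: less_imp_le\<close>)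
    show "nn_vnorm (\<delta> 0) x \<le> R" using x dim0 by simp
    show "0 \<le> nn_beta \<alpha> k * Mp" using beta_pos[OF kd] Mp_pos by simp
    show "0 \<le> nn_vnorm (\<delta> 0) x" by (rule vnorm_nonneg)
  qed
  finally show ?thesis by simp
qed

lemma Dl_bound:
  assumes k: "1 \<le> k" "k \<le> d" and g: "good k u" and z: "z \<in> space \<mu>"
  shows "\<bar>Dl k u z\<bar> \<le> aa k"
proof -
  obtain x y where zxy: "z = (x, y)" by (cases z)
  have x: "nn_vnorm m x \<le> R" using supp z zxy by auto
  have T1: "ch k u \<in> Tb" using ch_Tb[OF k(2) g] .
  have T2: "ch (k - 1) u \<in> Tb" using ch_Tb[of "k - 1" u] good_mono[OF g, of "k - 1"] k by auto
  have "\<bar>Dl k u z\<bar> \<le> Lc * nn_vnorm (\<delta> d) (\<lambda>i. nn_net d \<delta> \<phi> \<phi>o (ch k u) x i - nn_net d \<delta> \<phi> \<phi>o (ch (k - 1) u) x i)"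
    using loss_lip T1 T2 x unfolding Dl_def zxy by blast
  also have "\<dots> \<le> Lc * (nn_beta \<alpha> k * Mp * R)"
    using net_chain[OF k g x] Lpos by (intro mult_left_mono) auto
  finally show ?thesis by (simp add: aa_def mult_ac)
qed

lemma Dl_tele: "w \<in> nn_tuples d X \<Longrightarrow> (\<Sum>k\<in>{1..d}. Dl k w z) = lf w z - lf M0 z"
  unfolding Dl_def using telescope_ivl[of "\<lambda>k. lf (ch k w) z" d] by (simp add: ch_d ch0)

lemma lf_M0_bound:
  assumes "w \<in> Tb" "z \<in> space \<mu>"
  shows "\<bar>lf w z - lf M0 z\<bar> \<le> (\<Sum>k\<in>{1..d}. aa k)"
proof -
  have "\<bar>lf w z - lf M0 z\<bar> = \<bar>\<Sum>k\<in>{1..d}. Dl k w z\<bar>" using Dl_tele[OF assms(1)] by simp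
  also have "\<dots> \<le> (\<Sum>k\<in>{1..d}. \<bar>Dl k w z\<bar>)" by (rule sum_abs)
  also have "\<dots> \<le> (\<Sum>k\<in>{1..d}. aa k)"
    using assms by (intro sum_mono Dl_bound good_Tb) auto
  finally show ?thesis .
qed

end

lemma meas_count_space_int:
  fixes f :: "'i \<Rightarrow> 'a \<Rightarrow> ennreal"
  assumes "countable I" and meas: "\<And>i. i \<in> I \<Longrightarrow> f i \<in> borel_measurable M"
  shows "(\<lambda>x. \<integral>\<^sup>+i. f i x \<partial>count_space I) \<in> borel_measurable M"
proof (cases "finite I")
  case True
  then show ?thesis using meas by (simp add: nn_integral_count_space_finite)
next
  case False
  then have ne: "I \<noteq> {}" by auto
  note * = bij_betw_from_nat_into[OF \<open>countable I\<close> False]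
  have eq: "(\<integral>\<^sup>+i. f i x \<partial>count_space I) = (\<Sum>n. f (from_nat_into I n) x)" for x
    by (simp add: nn_integral_bij_count_space[symmetric, OF *] nn_integral_count_space_nat)
  have m: "\<And>n. (\<lambda>x. f (from_nat_into I n) x) \<in> borel_measurable M"
    using meas from_nat_into[OF ne] by auto
  show ?thesis unfolding eq using m by measurable
qed

lemma pmf_int_count:
  assumes "set_pmf p \<subseteq> T"
  shows "(\<integral>\<^sup>+ w. h w \<partial>measure_pmf p) = (\<integral>\<^sup>+ w. ennreal (pmf p w) * h w \<partial>count_space T)"
proof -
  have "(\<integral>\<^sup>+ w. h w \<partial>measure_pmf p) = (\<integral>\<^sup>+ w. ennreal (pmf p w) * h w \<partial>count_space UNIV)"
    by (rule nn_integral_measure_pmf)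
  also have "\<dots> = (\<integral>\<^sup>+ w. ennreal (pmf p w) * h w * indicator T w \<partial>count_space UNIV)"
    using assms by (intro nn_integral_cong) (auto simp: indicator_def pmf_eq_0_set_pmf)
  also have "\<dots> = (\<integral>\<^sup>+ w. ennreal (pmf p w) * h w \<partial>count_space T)"
    by (simp add: nn_integral_count_space_indicator)
  finally show ?thesis .
qed

lemma meas_pmf_int:
  assumes T: "countable T" and supp: "\<forall>s\<in>space M. set_pmf (P s) \<subseteq> T"
    and pm: "\<forall>w. (\<lambda>s. ennreal (pmf (P s) w)) \<in> borel_measurable M"
    and hm: "\<And>w. w \<in> T \<Longrightarrow> h w \<in> borel_measurable M"
  shows "(\<lambda>s. \<integral>\<^sup>+ w. h w s \<partial>measure_pmf (P s)) \<in> borel_measurable M"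
proof -
  have pm': "\<And>w. (\<lambda>s. ennreal (pmf (P s) w)) \<in> borel_measurable M" using pm by blast
  have "(\<lambda>s. \<integral>\<^sup>+ w. ennreal (pmf (P s) w) * h w s \<partial>count_space T) \<in> borel_measurable M"
    by (intro meas_count_space_int T borel_measurable_times_ennreal pm' hm)
  then show ?thesis
    by (rule measurable_cong[THEN iffD1, rotated]) (subst pmf_int_count[where T=T], use supp in auto)
qed

lemma KL_return: "KL_pmf (return_pmf a) q = neglog (pmf q a)"
proof (cases "pmf q a = 0")
  case True
  have "\<infinity> \<le> KL_pmf (return_pmf a) q"
  proof -
    have "(\<integral>\<^sup>+ x. \<infinity> * indicator {a} x \<partial>count_space UNIV) \<le> KL_pmf (return_pmf a) q"
      unfolding KL_pmf_def using True
      by (intro nn_integral_mono) (auto simp: indicator_def pmf_return)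
    then show ?thesis by simp
  qed
  then show ?thesis using True by (simp add: neglog_def top_unique)
next
  case False
  then have qp: "0 < pmf q a" using pmf_nonneg[of q a] by linarith
  define r where "r = - ln (pmf q a) - 1 + pmf q a"
  have r0: "0 \<le> r" unfolding r_def using ln_le_minus_one[OF qp] by simp
  have "KL_pmf (return_pmf a) q = (\<integral>\<^sup>+ x. ennreal (pmf q x) * indicator (-{a}) x + ennreal r * indicator {a} x \<partial>count_space UNIV)"
    unfolding KL_pmf_def using False
    by (intro nn_integral_cong) (auto simp: indicator_def pmf_return r_def ln_div qp)
  also have "\<dots> = (\<integral>\<^sup>+ x. ennreal (pmf q x) * indicator (-{a}) x \<partial>count_space UNIV) + ennreal r"
    by (subst nn_integral_add) auto
  also have "(\<integral>\<^sup>+ x. ennreal (pmf q x) * indicator (-{a}) x \<partial>count_space UNIV) = emeasure (measure_pmf q) (-{a})"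
    by (simp add: nn_integral_count_space_indicator[symmetric] nn_integral_pmf)
  also have "emeasure (measure_pmf q) (-{a}) = ennreal (1 - pmf q a)"
  proof -
    have "measure (measure_pmf q) (UNIV - {a}) = 1 - pmf q a"
      using measure_pmf.prob_compl[of "{a}" q] by (simp add: measure_pmf_single)
    then show ?thesis by (simp add: measure_pmf.emeasure_eq_measure Compl_eq_Diff_UNIV)
  qed
  also have "ennreal (1 - pmf q a) + ennreal r = ennreal (- ln (pmf q a))"
    using r0 pmf_le_1[of q a] by (subst ennreal_plus[symmetric]) (auto simp: r_def)
  finally show ?thesis using False by (simp add: neglog_def)
qed

lemma fenchel_real:
  fixes p q g :: real
  assumes "0 < p" "0 < q"
  shows "p * g \<le> p * ln (p / q) - p + q * exp g"
proof -
  define y where "y = g - ln (p / q)"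
  have e: "q * exp g = p * exp y" using assms by (simp add: y_def exp_diff field_simps)
  have "1 + y \<le> exp y" by (rule exp_ge_add_one_self)
  then have "p * (1 + y) \<le> p * exp y" using assms by (intro mult_left_mono) auto
  then show ?thesis unfolding e by (simp add: y_def algebra_simps)
qed

lemma kl_term_nonneg:
  fixes p q :: real
  assumes "0 < p" "0 < q"
  shows "0 \<le> p * ln (p / q) - p + q"
proof -
  have "ln (q / p) \<le> q / p - 1" using assms by (intro ln_le_minus_one) auto
  then have "- ln (p / q) \<le> q / p - 1" using assms by (simp add: ln_div)
  then have "p * (- ln (p / q)) \<le> p * (q / p - 1)" using assms by (intro mult_left_mono) auto
  then show ?thesis using assms by (simp add: algebra_simps)
qed

definition kappa :: "real \<Rightarrow> real \<Rightarrow> ennreal" where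
  "kappa p q = (if p = 0 then ennreal q else if q = 0 then \<infinity> else ennreal (p * ln (p / q) - p + q))"

lemma KL_kappa: "KL_pmf p q = (\<integral>\<^sup>+ x. kappa (pmf p x) (pmf q x) \<partial>count_space UNIV)"
  by (simp add: KL_pmf_def kappa_def)

lemma fenchel_pt:
  fixes p q g r :: real
  assumes "0 \<le> p" "0 \<le> q" "0 < p \<Longrightarrow> 0 \<le> g + r" "0 \<le> r"
  shows "ennreal p * ennreal (g + r) + ennreal q \<le> kappa p q + ennreal q * ennreal (exp g) + ennreal p * ennreal r"
proof (cases "p = 0")
  case True then show ?thesis by (simp add: kappa_def)
next
  case False
  then have p: "0 < p" using assms by simp
  show ?thesis
  proof (cases "q = 0")
    case True then show ?thesis using False by (simp add: kappa_def)
  next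
    case False
    then have q: "0 < q" using assms by simp
    have gr: "0 \<le> g + r" using assms p by simp
    have k0: "0 \<le> p * ln (p / q) - p + q" by (rule kl_term_nonneg[OF p q])
    have "ennreal p * ennreal (g + r) + ennreal q = ennreal (p * (g + r) + q)"
      using p q gr by (simp add: ennreal_mult ennreal_plus)
    also have "\<dots> \<le> ennreal ((p * ln (p / q) - p + q) + q * exp g + p * r)"
      using fenchel_real[OF p q, of g] by (intro ennreal_leI) (simp add: algebra_simps)
    also have "\<dots> = kappa p q + ennreal q * ennreal (exp g) + ennreal p * ennreal r"
      using p q k0 assms(4) \<open>p \<noteq> 0\<close> False
      by (simp add: kappa_def ennreal_mult ennreal_plus)
    finally show ?thesis .
  qed
qed

context nnset begin

abbreviation "SM \<equiv> sample_measure \<mu> n"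
abbreviation "TT \<equiv> nn_tuples d Ws"

lemma space_SM: "s \<in> space SM \<Longrightarrow> i < n \<Longrightarrow> s i \<in> space \<mu>"
  by (auto simp: space_PiM)

lemma PS: "product_prob_space (\<lambda>_::nat. \<mu>)"
  unfolding product_prob_space_def product_sigma_finite_def product_prob_space_axioms_def
  using prob by (auto intro: prob_space_imp_sigma_finite)

lemma prob_SM: "prob_space SM" by (rule prob_space_PiM) (rule prob)

lemma TT_Tb: "w \<in> TT \<Longrightarrow> w \<in> Tb" using Ws by (auto simp: nn_tuples_def)

lemma countable_TT: "countable TT"
proof -
  have "TT \<subseteq> (\<lambda>f j. if j \<in> {1..d} then f j else (\<lambda>_ _. 0)) ` (PiE {1..d} Ws)"
  proof
    fix w assume w: "w \<in> TT"
    then have "w = (\<lambda>j. if j \<in> {1..d} then restrict w {1..d} j else (\<lambda>_ _. 0))"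
      by (auto simp: nn_tuples_def fun_eq_iff)
    moreover have "restrict w {1..d} \<in> PiE {1..d} Ws" using w by (auto simp: nn_tuples_def)
    ultimately show "w \<in> (\<lambda>f j. if j \<in> {1..d} then f j else (\<lambda>_ _. 0)) ` (PiE {1..d} Ws)" by blast
  qed
  moreover have "countable (PiE {1..d} Ws)" using Ws by (intro countable_PiE) auto
  ultimately show ?thesis by (blast intro: countable_subset countable_image)
qed

lemma lf_meas: "w \<in> Tb \<Longrightarrow> lf w \<in> borel_measurable \<mu>" using loss_meas by auto

lemma lf_nonneg: "0 \<le> lf w z" using loss_nonneg by blast

lemma lf_comp_meas: assumes w: "w \<in> Tb" and i: "i < n" shows "(\<lambda>s. lf w (s i)) \<in> borel_measurable SM"
proof -
  have "(\<lambda>s. s i) \<in> SM \<rightarrow>\<^sub>M \<mu>" using measurable_component_singleton[of i "{..<n}" "\<lambda>_. \<mu>"] i by simp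
  from measurable_compose[OF this lf_meas[OF w]] show ?thesis .
qed

lemma nn_comp:
  assumes g: "g \<in> borel_measurable \<mu>" and i: "i < n"
  shows "(\<integral>\<^sup>+ s. g (s i) \<partial>SM) = integral\<^sup>N \<mu> g"
proof -
  interpret PS: product_prob_space "\<lambda>_::nat. \<mu>" by (rule PS)
  define f where "f = (\<lambda>j x. if j = i then g x else (1::ennreal))"
  have "(\<integral>\<^sup>+ s. g (s i) \<partial>SM) = (\<integral>\<^sup>+ s. (\<Prod>j\<in>{..<n}. f j (s j)) \<partial>SM)"
    using i by (intro nn_integral_cong) (simp add: f_def prod.delta)
  also have "\<dots> = (\<Prod>j\<in>{..<n}. integral\<^sup>N \<mu> (f j))"
    using g by (intro PS.product_nn_integral_prod) (auto simp: f_def)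
  also have "\<dots> = (\<Prod>j\<in>{..<n}. if j = i then integral\<^sup>N \<mu> g else 1)"
    using prob_space.emeasure_space_1[OF prob] by (intro prod.cong) (auto simp: f_def nn_integral_const)
  also have "\<dots> = integral\<^sup>N \<mu> g" using i by (simp add: prod.delta)
  finally show ?thesis .
qed

lemma emp_int:
  assumes w: "w \<in> Tb"
  shows "(\<integral>\<^sup>+ s. ennreal (emp_loss lf n w s) \<partial>SM) = pop_loss lf \<mu> w"
proof -
  have n0: "0 < real n" using npos by simp
  have pt: "ennreal (emp_loss lf n w s) = ennreal (1 / real n) * (\<Sum>i<n. ennreal (lf w (s i)))" for s
  proof -
    have "ennreal (emp_loss lf n w s) = ennreal (1 / real n) * ennreal (\<Sum>i<n. lf w (s i))"
      by (subst ennreal_mult'[symmetric]) (auto simp: emp_loss_def)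
    also have "ennreal (\<Sum>i<n. lf w (s i)) = (\<Sum>i<n. ennreal (lf w (s i)))"
      by (subst sum_ennreal) (auto simp: lf_nonneg)
    finally show ?thesis .
  qed
  have m: "\<And>i. i \<in> {..<n} \<Longrightarrow> (\<lambda>s. ennreal (lf w (s i))) \<in> borel_measurable SM"
    using lf_comp_meas[OF w] by auto
  have "(\<integral>\<^sup>+ s. ennreal (emp_loss lf n w s) \<partial>SM) = ennreal (1 / real n) * (\<integral>\<^sup>+ s. (\<Sum>i<n. ennreal (lf w (s i))) \<partial>SM)"
    unfolding pt using m by (intro nn_integral_cmult borel_measurable_sum) auto
  also have "(\<integral>\<^sup>+ s. (\<Sum>i<n. ennreal (lf w (s i))) \<partial>SM) = (\<Sum>i<n. \<integral>\<^sup>+ s. ennreal (lf w (s i)) \<partial>SM)"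
    using m by (rule nn_integral_sum)
  also have "\<dots> = (\<Sum>i<n. pop_loss lf \<mu> w)"
  proof -
    have gm: "(\<lambda>z. ennreal (lf w z)) \<in> borel_measurable \<mu>" using lf_meas[OF w] by measurable
    show ?thesis by (intro sum.cong refl) (simp add: pop_loss_def nn_comp[OF gm])
  qed
  also have "\<dots> = of_nat n * pop_loss lf \<mu> w" by simp
  also have "ennreal (1 / real n) * (of_nat n * pop_loss lf \<mu> w) = (ennreal (1 / real n) * of_nat n) * pop_loss lf \<mu> w"
    by (simp add: mult.assoc)
  also have "ennreal (1 / real n) * of_nat n = 1"
    using n0 by (simp add: ennreal_of_nat_eq_real_of_nat ennreal_mult'[symmetric])
  finally show ?thesis by simp
qed

lemma ch_Tb': "k \<in> {1..d} \<Longrightarrow> good k u \<Longrightarrow> ch k u \<in> Tb \<and> ch (k - 1) u \<in> Tb"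
  using ch_Tb[of k u] ch_Tb[of "k - 1" u] good_mono[of k u "k - 1"] by auto

lemma Dl_meas: "k \<in> {1..d} \<Longrightarrow> good k u \<Longrightarrow> Dl k u \<in> borel_measurable \<mu>"
  unfolding Dl_def[abs_def] using ch_Tb'[of k u] lf_meas by (intro borel_measurable_diff) auto

lemma Dl_int: assumes "k \<in> {1..d}" "good k u" shows "integrable \<mu> (Dl k u)"
proof -
  interpret prob_space \<mu> by (rule prob)
  show ?thesis
    using Dl_bound[of k u] assms Dl_meas[OF assms]
    by (intro integrable_const_bound[where B="aa k"]) (auto intro!: AE_I2)
qed

definition "mk k u = integral\<^sup>L \<mu> (Dl k u)"
definition "FF k u s = mk k u - (\<Sum>i<n. Dl k u (s i)) / real n"

lemma mk_bound: assumes "k \<in> {1..d}" "good k u" shows "\<bar>mk k u\<bar> \<le> aa k"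
proof -
  have "\<bar>mk k u\<bar> \<le> (\<integral>z. \<bar>Dl k u z\<bar> \<partial>\<mu>)" unfolding mk_def by (rule integral_abs_bound)
  also have "\<dots> \<le> aa k"
    using Dl_bound[of k u] assms Dl_int[OF assms]
    by (intro prob_space.integral_le_const[OF prob]) (auto intro!: AE_I2)
  finally show ?thesis .
qed

lemma FF_bound:
  assumes "k \<in> {1..d}" "good k u" "s \<in> space SM"
  shows "\<bar>FF k u s\<bar> \<le> 2 * aa k"
proof -
  have n0: "0 < real n" using npos by simp
  have "\<bar>\<Sum>i<n. Dl k u (s i)\<bar> \<le> (\<Sum>i<n. \<bar>Dl k u (s i)\<bar>)" by (rule sum_abs)
  also have "\<dots> \<le> (\<Sum>i<n. aa k)"
    using assms space_SM Dl_bound by (intro sum_mono) auto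
  also have "\<dots> = real n * aa k" by simp
  finally have "\<bar>(\<Sum>i<n. Dl k u (s i)) / real n\<bar> \<le> aa k"
    using n0 by (simp add: field_simps)
  then show ?thesis using mk_bound[OF assms(1,2)] unfolding FF_def by linarith
qed

lemma FF_meas:
  assumes "k \<in> {1..d}" "good k u"
  shows "(\<lambda>s. FF k u s) \<in> borel_measurable SM"
proof -
  have "(\<lambda>s. Dl k u (s i)) \<in> borel_measurable SM" if "i < n" for i
    using that Dl_meas[OF assms] by (intro measurable_compose[OF measurable_component_singleton]) auto
  then show ?thesis unfolding FF_def by measurable
qed

lemma hoeff:
  assumes k: "k \<in> {1..d}" "good k u" and lam: "0 < lam"
  shows "(\<integral>\<^sup>+ s. ennreal (exp (lam * FF k u s)) \<partial>SM) \<le> ennreal (exp (lam\<^sup>2 * (aa k)\<^sup>2 / (2 * real n)))"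
proof -
  interpret PS: product_prob_space "\<lambda>_::nat. \<mu>" by (rule PS)
  have n0: "0 < real n" using npos by simp
  define l where "l = lam / real n"
  have l0: "0 < l" using lam n0 by (simp add: l_def)
  have IB: "interval_bounded_random_variable \<mu> (\<lambda>z. - Dl k u z) (- aa k) (aa k)"
    unfolding interval_bounded_random_variable_def interval_bounded_random_variable_axioms_def
    using prob Dl_meas[OF k] Dl_bound[of k u] k
    by (auto intro!: AE_I2 simp: abs_le_iff)
  have H: "(\<integral>\<^sup>+ z. ennreal (exp (l * ((- Dl k u z) - integral\<^sup>L \<mu> (\<lambda>z. - Dl k u z)))) \<partial>\<mu>)
      \<le> ennreal (exp (l\<^sup>2 * (aa k - - aa k)\<^sup>2 / 8))"
    by (rule interval_bounded_random_variable.Hoeffdings_lemma_nn_integral[OF IB l0])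
  define g where "g z = ennreal (exp (l * (mk k u - Dl k u z)))" for z
  have Hg: "integral\<^sup>N \<mu> g \<le> ennreal (exp (l\<^sup>2 * (aa k)\<^sup>2 / 2))"
  proof -
    have "integral\<^sup>N \<mu> g = (\<integral>\<^sup>+ z. ennreal (exp (l * ((- Dl k u z) - integral\<^sup>L \<mu> (\<lambda>z. - Dl k u z)))) \<partial>\<mu>)"
      unfolding g_def mk_def by (simp add: algebra_simps)
    also have "\<dots> \<le> ennreal (exp (l\<^sup>2 * (aa k - - aa k)\<^sup>2 / 8))" by (rule H)
    also have "l\<^sup>2 * (aa k - - aa k)\<^sup>2 / 8 = l\<^sup>2 * (aa k)\<^sup>2 / 2" by (simp add: power2_eq_square)
    finally show ?thesis .
  qed
  have gm: "g \<in> borel_measurable \<mu>" unfolding g_def using Dl_meas[OF k] by measurable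
  have pt: "ennreal (exp (lam * FF k u s)) = (\<Prod>i\<in>{..<n}. g (s i))" for s
  proof -
    have "(\<Sum>i<n. l * (mk k u - Dl k u (s i))) = l * (real n * mk k u) - l * (\<Sum>i<n. Dl k u (s i))"
      by (simp add: right_diff_distrib sum_subtractf sum_distrib_left)
    also have "\<dots> = lam * FF k u s"
      unfolding FF_def l_def using n0 by (simp add: field_simps)
    finally have "lam * FF k u s = (\<Sum>i<n. l * (mk k u - Dl k u (s i)))" by simp
    then have "exp (lam * FF k u s) = (\<Prod>i<n. exp (l * (mk k u - Dl k u (s i))))"
      by (simp add: exp_sum)
    then show ?thesis unfolding g_def by (simp add: prod_ennreal)
  qed
  have "(\<integral>\<^sup>+ s. ennreal (exp (lam * FF k u s)) \<partial>SM) = (\<Prod>i\<in>{..<n}. integral\<^sup>N \<mu> g)"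
    unfolding pt using gm by (intro PS.product_nn_integral_prod) auto
  also have "\<dots> = (integral\<^sup>N \<mu> g) ^ n" by simp
  also have "\<dots> \<le> (ennreal (exp (l\<^sup>2 * (aa k)\<^sup>2 / 2))) ^ n" by (intro power_mono Hg) auto
  also have "\<dots> = ennreal (exp (lam\<^sup>2 * (aa k)\<^sup>2 / (2 * real n)))"
  proof -
    have "(exp (l\<^sup>2 * (aa k)\<^sup>2 / 2)) ^ n = exp (real n * (l\<^sup>2 * (aa k)\<^sup>2 / 2))"
      using exp_of_nat_mult[of n "l\<^sup>2 * (aa k)\<^sup>2 / 2"] by simp
    also have "real n * (l\<^sup>2 * (aa k)\<^sup>2 / 2) = lam\<^sup>2 * (aa k)\<^sup>2 / (2 * real n)"
      unfolding l_def using n0 by (simp add: power2_eq_square field_simps)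
    finally show ?thesis by (simp add: ennreal_power)
  qed
  finally show ?thesis .
qed

end

context nnset begin

lemma Dl_prefix: "Dl k (nn_prefix k w) = Dl k w"
  by (simp add: Dl_def[abs_def] ch_prefix)

lemma FF_prefix: "FF k (nn_prefix k w) s = FF k w s"
  by (simp add: FF_def mk_def Dl_prefix)

lemma good_pre_TT: "u \<in> nn_prefix k ` TT \<Longrightarrow> k \<le> d \<Longrightarrow> good k u"
  using good_T good_prefix by auto

lemma adm_supp: "admissible d Ws \<mu> n P \<Longrightarrow> s \<in> space SM \<Longrightarrow> set_pmf (P s) \<subseteq> TT"
  by (simp add: admissible_def)

lemma adm_meas: "admissible d Ws \<mu> n P \<Longrightarrow> \<forall>w. (\<lambda>s. ennreal (pmf (P s) w)) \<in> borel_measurable SM"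
  by (simp add: admissible_def)

lemma adm_int_meas:
  assumes adm: "admissible d Ws \<mu> n P" and hm: "\<And>w. w \<in> TT \<Longrightarrow> h w \<in> borel_measurable SM"
  shows "(\<lambda>s. \<integral>\<^sup>+ w. h w s \<partial>measure_pmf (P s)) \<in> borel_measurable SM"
  using adm_supp[OF adm] adm_meas[OF adm] hm by (intro meas_pmf_int[OF countable_TT]) auto

lemma KL_meas:
  assumes adm: "admissible d Ws \<mu> n P" and k: "k \<in> {1..d}"
  shows "(\<lambda>s. KL_pmf (map_pmf (nn_prefix k) (P s)) (Q k)) \<in> borel_measurable SM"
proof -
  define U where "U = nn_prefix k ` TT"
  have cU: "countable U" unfolding U_def using countable_TT by simp
  have QU: "set_pmf (Q k) \<subseteq> U" using Qsupp k by (auto simp: U_def)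
  have eq: "KL_pmf (map_pmf (nn_prefix k) (P s)) (Q k)
      = (\<integral>\<^sup>+ u. kappa (pmf (map_pmf (nn_prefix k) (P s)) u) (pmf (Q k) u) \<partial>count_space U)"
    if s: "s \<in> space SM" for s
  proof -
    have pU: "set_pmf (map_pmf (nn_prefix k) (P s)) \<subseteq> U"
      using adm_supp[OF adm s] by (auto simp: U_def)
    have "KL_pmf (map_pmf (nn_prefix k) (P s)) (Q k)
        = (\<integral>\<^sup>+ u. kappa (pmf (map_pmf (nn_prefix k) (P s)) u) (pmf (Q k) u) * indicator U u \<partial>count_space UNIV)"
      unfolding KL_kappa using pU QU
      by (intro nn_integral_cong) (auto simp: indicator_def kappa_def pmf_eq_0_set_pmf)
    then show ?thesis by (simp add: nn_integral_count_space_indicator)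
  qed
  have m: "(\<lambda>s. kappa (pmf (map_pmf (nn_prefix k) (P s)) u) (pmf (Q k) u)) \<in> borel_measurable SM" for u
  proof -
    have "(\<lambda>s. ennreal (pmf (map_pmf (nn_prefix k) (P s)) u)) \<in> borel_measurable SM"
      unfolding ennreal_pmf_map by (rule adm_int_meas[OF adm]) simp
    then have "(\<lambda>s. enn2real (ennreal (pmf (map_pmf (nn_prefix k) (P s)) u))) \<in> borel_measurable SM"
      by (rule borel_measurable_enn2real)
    then have [measurable]: "(\<lambda>s. pmf (map_pmf (nn_prefix k) (P s)) u) \<in> borel_measurable SM"
      by simp
    show ?thesis unfolding kappa_def by measurable
  qed
  have "(\<lambda>s. \<integral>\<^sup>+ u. kappa (pmf (map_pmf (nn_prefix k) (P s)) u) (pmf (Q k) u) \<partial>count_space U) \<in> borel_measurable SM"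
    by (intro meas_count_space_int cU m)
  then show ?thesis by (rule measurable_cong[THEN iffD1, rotated]) (simp add: eq)
qed

lemma perk:
  assumes adm: "admissible d Ws \<mu> n P" and k: "k \<in> {1..d}" and lam: "0 < lam"
  defines "c \<equiv> lam\<^sup>2 * (aa k)\<^sup>2 / (2 * real n)"
  shows "(\<integral>\<^sup>+ s. \<integral>\<^sup>+ w. ennreal (FF k w s + 2 * aa k) \<partial>P s \<partial>SM)
          \<le> ennreal (1 / lam) * cond_KL \<mu> n k P (Q k) + ennreal (c / lam + 2 * aa k)"
proof -
  interpret SMp: prob_space SM by (rule prob_SM)
  define b where "b = 2 * aa k"
  define r where "r = c + lam * b"
  have kd: "k \<le> d" using k by auto
  have aa0: "0 < aa k" using aa_pos k by auto
  have c0: "0 \<le> c" unfolding c_def by simp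
  have r0: "0 \<le> r" unfolding r_def b_def using c0 lam aa0 by simp
  define X where "X s = (\<integral>\<^sup>+ w. ennreal (lam * (FF k w s + b)) \<partial>P s)" for s
  define KLs where "KLs s = KL_pmf (map_pmf (nn_prefix k) (P s)) (Q k)" for s
  define E where "E u s = ennreal (exp (lam * FF k u s - c))" for u s
  define Y where "Y s = (\<integral>\<^sup>+ u. E u s \<partial>Q k)" for s
  have goodQ: "good k u" if "u \<in> set_pmf (Q k)" for u
    using Qsupp k good_pre_TT kd that by blast
  have pw: "X s + 1 \<le> KLs s + Y s + ennreal r" if s: "s \<in> space SM" for s
  proof -
    define p where "p = map_pmf (nn_prefix k) (P s)"
    define q where "q = Q k"
    define G where "G u = lam * FF k u s - c" for u
    have cond: "0 \<le> G u + r" if "0 < pmf p u" for u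
    proof -
      have "u \<in> set_pmf p" using that by (simp add: set_pmf_iff)
      then obtain w where w: "w \<in> set_pmf (P s)" "u = nn_prefix k w" by (auto simp: p_def)
      then have wT: "w \<in> TT" using adm_supp[OF adm s] by auto
      have "FF k u s = FF k w s" using w by (simp add: FF_prefix)
      moreover have "\<bar>FF k w s\<bar> \<le> 2 * aa k" using FF_bound[OF k good_T[OF wT kd] s] .
      ultimately have "0 \<le> FF k u s + b" by (simp add: b_def abs_le_iff)
      then have "0 \<le> lam * (FF k u s + b)" using lam by simp
      then show ?thesis by (simp add: G_def r_def algebra_simps)
    qed
    have "(\<integral>\<^sup>+ u. ennreal (pmf p u) * ennreal (G u + r) + ennreal (pmf q u) \<partial>count_space UNIV)
        \<le> (\<integral>\<^sup>+ u. kappa (pmf p u) (pmf q u) + ennreal (pmf q u) * ennreal (exp (G u))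
              + ennreal (pmf p u) * ennreal r \<partial>count_space UNIV)"
      using cond r0 by (intro nn_integral_mono fenchel_pt) auto
    moreover have "(\<integral>\<^sup>+ u. ennreal (pmf p u) * ennreal (G u + r) + ennreal (pmf q u) \<partial>count_space UNIV) = X s + 1"
    proof -
      have "(\<integral>\<^sup>+ u. ennreal (pmf p u) * ennreal (G u + r) + ennreal (pmf q u) \<partial>count_space UNIV)
          = (\<integral>\<^sup>+ u. ennreal (pmf p u) * ennreal (G u + r) \<partial>count_space UNIV)
            + (\<integral>\<^sup>+ u. ennreal (pmf q u) \<partial>count_space UNIV)"
        by (rule nn_integral_add) auto
      also have "(\<integral>\<^sup>+ u. ennreal (pmf p u) * ennreal (G u + r) \<partial>count_space UNIV)
          = (\<integral>\<^sup>+ u. ennreal (G u + r) \<partial>measure_pmf p)"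
        by (rule nn_integral_measure_pmf[symmetric])
      also have "\<dots> = (\<integral>\<^sup>+ w. ennreal (G (nn_prefix k w) + r) \<partial>P s)"
        by (simp add: p_def nn_integral_map_pmf)
      also have "\<dots> = X s" unfolding X_def G_def r_def
        by (intro nn_integral_cong) (simp add: FF_prefix algebra_simps)
      also have "(\<integral>\<^sup>+ u. ennreal (pmf q u) \<partial>count_space UNIV) = 1"
        by (simp add: nn_integral_pmf emeasure_pmf_UNIV)
      finally show ?thesis .
    qed
    moreover have "(\<integral>\<^sup>+ u. kappa (pmf p u) (pmf q u) + ennreal (pmf q u) * ennreal (exp (G u))
              + ennreal (pmf p u) * ennreal r \<partial>count_space UNIV) = KLs s + Y s + ennreal r"
    proof -
      have "(\<integral>\<^sup>+ u. kappa (pmf p u) (pmf q u) + ennreal (pmf q u) * ennreal (exp (G u))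
              + ennreal (pmf p u) * ennreal r \<partial>count_space UNIV)
          = (\<integral>\<^sup>+ u. kappa (pmf p u) (pmf q u) + ennreal (pmf q u) * ennreal (exp (G u)) \<partial>count_space UNIV)
            + (\<integral>\<^sup>+ u. ennreal (pmf p u) * ennreal r \<partial>count_space UNIV)"
        by (rule nn_integral_add) auto
      also have "(\<integral>\<^sup>+ u. kappa (pmf p u) (pmf q u) + ennreal (pmf q u) * ennreal (exp (G u)) \<partial>count_space UNIV)
          = (\<integral>\<^sup>+ u. kappa (pmf p u) (pmf q u) \<partial>count_space UNIV)
            + (\<integral>\<^sup>+ u. ennreal (pmf q u) * ennreal (exp (G u)) \<partial>count_space UNIV)"
        by (rule nn_integral_add) auto
      also have "(\<integral>\<^sup>+ u. kappa (pmf p u) (pmf q u) \<partial>count_space UNIV) = KLs s"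
        by (simp add: KLs_def KL_kappa p_def q_def)
      also have "(\<integral>\<^sup>+ u. ennreal (pmf q u) * ennreal (exp (G u)) \<partial>count_space UNIV) = Y s"
        by (simp add: Y_def E_def q_def G_def nn_integral_measure_pmf)
      also have "(\<integral>\<^sup>+ u. ennreal (pmf p u) * ennreal r \<partial>count_space UNIV) = ennreal r"
        by (simp add: nn_integral_multc nn_integral_pmf emeasure_pmf_UNIV)
      finally show ?thesis .
    qed
    ultimately show ?thesis by simp
  qed
  have hX: "(\<lambda>s. ennreal (lam * (FF k w s + b))) \<in> borel_measurable SM" if "w \<in> TT" for w
    using FF_meas[OF k good_T[OF that kd]] by measurable
  have Xm: "X \<in> borel_measurable SM"
    unfolding X_def[abs_def] by (rule adm_int_meas[OF adm hX])
  have KLm: "KLs \<in> borel_measurable SM"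
    unfolding KLs_def[abs_def] by (rule KL_meas[OF adm k])
  have Em: "E u \<in> borel_measurable SM" if "u \<in> set_pmf (Q k)" for u
    unfolding E_def using FF_meas[OF k goodQ[OF that]] by measurable
  have Ym: "Y \<in> borel_measurable SM"
    unfolding Y_def[abs_def] by (rule meas_pmf_int[where T="set_pmf (Q k)"]) (use Em in auto)
  have EI: "(\<integral>\<^sup>+ s. E u s \<partial>SM) \<le> 1" if u: "u \<in> set_pmf (Q k)" for u
  proof -
    have "(\<integral>\<^sup>+ s. E u s \<partial>SM) = (\<integral>\<^sup>+ s. ennreal (exp (- c)) * ennreal (exp (lam * FF k u s)) \<partial>SM)"
      unfolding E_def by (intro nn_integral_cong) (simp add: ennreal_mult'[symmetric] mult_exp_exp)
    also have "\<dots> = ennreal (exp (- c)) * (\<integral>\<^sup>+ s. ennreal (exp (lam * FF k u s)) \<partial>SM)"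
      using FF_meas[OF k goodQ[OF u]] by (intro nn_integral_cmult) measurable
    also have "\<dots> \<le> ennreal (exp (- c)) * ennreal (exp c)"
      unfolding c_def by (intro mult_left_mono hoeff[OF k goodQ[OF u] lam]) auto
    also have "\<dots> = 1" by (simp add: ennreal_mult'[symmetric] mult_exp_exp)
    finally show ?thesis .
  qed
  have YI: "(\<integral>\<^sup>+ s. Y s \<partial>SM) \<le> 1"
  proof -
    have "(\<integral>\<^sup>+ s. Y s \<partial>SM) = (\<integral>\<^sup>+ s. \<integral>\<^sup>+ u. ennreal (pmf (Q k) u) * E u s \<partial>count_space (set_pmf (Q k)) \<partial>SM)"
      unfolding Y_def by (intro nn_integral_cong pmf_int_count) simp
    also have "\<dots> = (\<integral>\<^sup>+ u. \<integral>\<^sup>+ s. ennreal (pmf (Q k) u) * E u s \<partial>SM \<partial>count_space (set_pmf (Q k)))"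
      using Em by (intro nn_integral_count_space_nn_integral) auto
    also have "\<dots> \<le> (\<integral>\<^sup>+ u. ennreal (pmf (Q k) u) \<partial>count_space (set_pmf (Q k)))"
    proof (intro nn_integral_mono)
      fix u assume "u \<in> space (count_space (set_pmf (Q k)))"
      then have u: "u \<in> set_pmf (Q k)" by simp
      have "(\<integral>\<^sup>+ s. ennreal (pmf (Q k) u) * E u s \<partial>SM) = ennreal (pmf (Q k) u) * (\<integral>\<^sup>+ s. E u s \<partial>SM)"
        using Em[OF u] by (rule nn_integral_cmult)
      also have "\<dots> \<le> ennreal (pmf (Q k) u) * 1" by (intro mult_left_mono EI[OF u]) auto
      finally show "(\<integral>\<^sup>+ s. ennreal (pmf (Q k) u) * E u s \<partial>SM) \<le> ennreal (pmf (Q k) u)" by simp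
    qed
    also have "\<dots> = 1" by (simp add: nn_integral_pmf emeasure_pmf)
    finally show ?thesis .
  qed
  have "(\<integral>\<^sup>+ s. X s + 1 \<partial>SM) \<le> (\<integral>\<^sup>+ s. KLs s + Y s + ennreal r \<partial>SM)"
    by (intro nn_integral_mono pw)
  moreover have "(\<integral>\<^sup>+ s. X s + 1 \<partial>SM) = integral\<^sup>N SM X + 1"
    using Xm by (simp add: nn_integral_add SMp.emeasure_space_1)
  moreover have "(\<integral>\<^sup>+ s. KLs s + Y s + ennreal r \<partial>SM) = cond_KL \<mu> n k P (Q k) + integral\<^sup>N SM Y + ennreal r"
    using KLm Ym by (simp add: nn_integral_add SMp.emeasure_space_1 cond_KL_def KLs_def[abs_def])
  ultimately have "integral\<^sup>N SM X + 1 \<le> cond_KL \<mu> n k P (Q k) + integral\<^sup>N SM Y + ennreal r" by simp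
  also have "\<dots> \<le> cond_KL \<mu> n k P (Q k) + 1 + ennreal r" using YI by (intro add_mono) auto
  finally have "1 + integral\<^sup>N SM X \<le> 1 + (cond_KL \<mu> n k P (Q k) + ennreal r)" by (simp add: add_ac)
  then have XI: "integral\<^sup>N SM X \<le> cond_KL \<mu> n k P (Q k) + ennreal r"
    by (simp add: ennreal_add_left_cancel_le)
  define Z where "Z s = (\<integral>\<^sup>+ w. ennreal (FF k w s + 2 * aa k) \<partial>P s)" for s
  have hZ: "(\<lambda>s. ennreal (FF k w s + 2 * aa k)) \<in> borel_measurable SM" if "w \<in> TT" for w
    using FF_meas[OF k good_T[OF that kd]] by measurable
  have Zm: "Z \<in> borel_measurable SM"
    unfolding Z_def[abs_def] by (rule adm_int_meas[OF adm hZ])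
  have XZ: "X s = ennreal lam * Z s" for s
  proof -
    have "X s = (\<integral>\<^sup>+ w. ennreal lam * ennreal (FF k w s + 2 * aa k) \<partial>P s)"
      unfolding X_def b_def using lam by (intro nn_integral_cong) (simp add: ennreal_mult')
    also have "\<dots> = ennreal lam * Z s" unfolding Z_def by (rule nn_integral_cmult) simp
    finally show ?thesis .
  qed
  have "integral\<^sup>N SM X = ennreal lam * integral\<^sup>N SM Z"
    unfolding XZ using Zm by (rule nn_integral_cmult)
  then have "ennreal lam * integral\<^sup>N SM Z \<le> cond_KL \<mu> n k P (Q k) + ennreal r" using XI by simp
  then have "ennreal (1 / lam) * (ennreal lam * integral\<^sup>N SM Z) \<le> ennreal (1 / lam) * (cond_KL \<mu> n k P (Q k) + ennreal r)"
    by (intro mult_left_mono) auto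
  moreover have "ennreal (1 / lam) * (ennreal lam * integral\<^sup>N SM Z) = integral\<^sup>N SM Z"
  proof -
    have "ennreal (1 / lam) * ennreal lam = 1" using lam by (simp add: ennreal_mult'[symmetric])
    then show ?thesis by (simp add: mult.assoc[symmetric])
  qed
  moreover have "ennreal (1 / lam) * (cond_KL \<mu> n k P (Q k) + ennreal r)
      = ennreal (1 / lam) * cond_KL \<mu> n k P (Q k) + ennreal (c / lam + 2 * aa k)"
  proof -
    have "ennreal (1 / lam) * ennreal r = ennreal (c / lam + 2 * aa k)"
      using lam r0 by (simp add: ennreal_mult'[symmetric] r_def b_def field_simps)
    then show ?thesis by (simp add: distrib_left)
  qed
  ultimately show ?thesis unfolding Z_def by simp
qed

end

context nnset begin

context
  assumes fin: "pop_loss lf \<mu> what < \<infinity>"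
begin

lemma what_Tb: "what \<in> Tb" using TT_Tb what_in by blast

lemma int_what: "integrable \<mu> (lf what)"
proof (rule integrableI_nonneg)
  show "lf what \<in> borel_measurable \<mu>" by (rule lf_meas[OF what_Tb])
  show "AE x in \<mu>. 0 \<le> lf what x" by (simp add: lf_nonneg)
  show "(\<integral>\<^sup>+ x. ennreal (lf what x) \<partial>\<mu>) < \<infinity>" using fin by (simp add: pop_loss_def)
qed

lemma lf_int: assumes w: "w \<in> Tb" shows "integrable \<mu> (lf w)"
proof -
  interpret prob_space \<mu> by (rule prob)
  have b: "\<bar>lf w z - lf what z\<bar> \<le> 2 * (\<Sum>k\<in>{1..d}. aa k)" if "z \<in> space \<mu>" for z
    using lf_M0_bound[OF w that] lf_M0_bound[OF what_Tb that] by linarith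
  have "integrable \<mu> (\<lambda>z. lf w z - lf what z)"
    using b lf_meas[OF w] lf_meas[OF what_Tb]
    by (intro integrable_const_bound[where B="2 * (\<Sum>k\<in>{1..d}. aa k)"]) (auto intro!: AE_I2)
  then have "integrable \<mu> (\<lambda>z. lf what z + (lf w z - lf what z))"
    using int_what by (intro Bochner_Integration.integrable_add) auto
  then show ?thesis by simp
qed

lemma pop_eq: "w \<in> Tb \<Longrightarrow> pop_loss lf \<mu> w = ennreal (integral\<^sup>L \<mu> (lf w))"
  unfolding pop_loss_def by (intro nn_integral_eq_integral lf_int) (auto simp: lf_nonneg)

lemma Lmu_nonneg: "0 \<le> integral\<^sup>L \<mu> (lf w)"
  by (intro integral_nonneg_AE) (simp add: lf_nonneg)

lemma tele_int:
  assumes w: "w \<in> TT"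
  shows "integral\<^sup>L \<mu> (lf w) - integral\<^sup>L \<mu> (lf M0) = (\<Sum>k\<in>{1..d}. mk k w)"
proof -
  have g: "good k w" if "k \<in> {1..d}" for k using good_T[OF w] that by auto
  have "integral\<^sup>L \<mu> (lf w) - integral\<^sup>L \<mu> (lf M0) = integral\<^sup>L \<mu> (\<lambda>z. lf w z - lf M0 z)"
    using lf_int[OF TT_Tb[OF w]] lf_int[OF M0_Tb] by (simp add: Bochner_Integration.integral_diff)
  also have "\<dots> = integral\<^sup>L \<mu> (\<lambda>z. \<Sum>k\<in>{1..d}. Dl k w z)"
    using Dl_tele[OF w] by simp
  also have "\<dots> = (\<Sum>k\<in>{1..d}. mk k w)"
    unfolding mk_def using Dl_int g by (intro Bochner_Integration.integral_sum) auto
  finally show ?thesis .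
qed

lemma ident:
  assumes w: "w \<in> TT" and s: "s \<in> space SM"
  shows "integral\<^sup>L \<mu> (lf w) + emp_loss lf n M0 s + (\<Sum>k\<in>{1..d}. 2 * aa k)
       = emp_loss lf n w s + integral\<^sup>L \<mu> (lf M0) + (\<Sum>k\<in>{1..d}. FF k w s + 2 * aa k)"
proof -
  have "emp_loss lf n w s - emp_loss lf n M0 s = (\<Sum>i<n. lf w (s i) - lf M0 (s i)) / real n"
    by (simp add: emp_loss_def sum_subtractf diff_divide_distrib)
  also have "\<dots> = (\<Sum>i<n. \<Sum>k\<in>{1..d}. Dl k w (s i)) / real n"
    using Dl_tele[OF w] by simp
  also have "\<dots> = (\<Sum>k\<in>{1..d}. (\<Sum>i<n. Dl k w (s i)) / real n)"
    by (simp add: sum.swap[of _ "{..<n}"] sum_divide_distrib)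
  finally have e: "emp_loss lf n w s - emp_loss lf n M0 s = (\<Sum>k\<in>{1..d}. (\<Sum>i<n. Dl k w (s i)) / real n)" .
  have f: "(\<Sum>k\<in>{1..d}. FF k w s) = (\<Sum>k\<in>{1..d}. mk k w) - (\<Sum>k\<in>{1..d}. (\<Sum>i<n. Dl k w (s i)) / real n)"
    by (simp add: FF_def sum_subtractf)
  show ?thesis using e f tele_int[OF w] by (simp add: sum.distrib)
qed

lemma emp_meas: "w \<in> Tb \<Longrightarrow> (\<lambda>s. emp_loss lf n w s) \<in> borel_measurable SM"
  unfolding emp_loss_def using lf_comp_meas by (intro borel_measurable_divide borel_measurable_sum) auto

lemma main_bound:
  assumes adm: "admissible d Ws \<mu> n P" and lam: "\<forall>k\<in>{1..d}. 0 < lamf k"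
  shows "risk lf \<mu> n P \<le> exp_emp_loss lf \<mu> n P
     + (\<Sum>k\<in>{1..d}. ennreal (1 / lamf k) * cond_KL \<mu> n k P (Q k)
          + ennreal ((lamf k)\<^sup>2 * (aa k)\<^sup>2 / (2 * real n) / lamf k))"
proof -
  interpret SMp: prob_space SM by (rule prob_SM)
  define B where "B = (\<Sum>k\<in>{1..d}. 2 * aa k)"
  define LM0 where "LM0 = integral\<^sup>L \<mu> (lf M0)"
  have B0: "0 \<le> B" unfolding B_def using aa_pos by (intro sum_nonneg) (auto intro: less_imp_le)
  have L0: "0 \<le> LM0" unfolding LM0_def by (rule Lmu_nonneg)
  define R1 where "R1 s = (\<integral>\<^sup>+ w. ennreal (integral\<^sup>L \<mu> (lf w)) \<partial>P s)" for s
  define E1 where "E1 s = (\<integral>\<^sup>+ w. ennreal (emp_loss lf n w s) \<partial>P s)" for s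
  define Z where "Z k s = (\<integral>\<^sup>+ w. ennreal (FF k w s + 2 * aa k) \<partial>P s)" for k s
  have eqs: "R1 s + ennreal (emp_loss lf n M0 s) + ennreal B = E1 s + ennreal LM0 + (\<Sum>k\<in>{1..d}. Z k s)"
    if s: "s \<in> space SM" for s
  proof -
    have e0: "0 \<le> emp_loss lf n w s" for w by (simp add: emp_loss_def lf_nonneg sum_nonneg)
    have pt: "ennreal (integral\<^sup>L \<mu> (lf w)) + ennreal (emp_loss lf n M0 s) + ennreal B
        = ennreal (emp_loss lf n w s) + ennreal LM0 + (\<Sum>k\<in>{1..d}. ennreal (FF k w s + 2 * aa k))"
      if w: "w \<in> set_pmf (P s)" for w
    proof -
      have wT: "w \<in> TT" using w adm_supp[OF adm s] by auto
      have FFn: "0 \<le> FF k w s + 2 * aa k" if "k \<in> {1..d}" for k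
        using FF_bound[OF that good_T[OF wT] s] that by (auto simp: abs_le_iff)
      have "ennreal (integral\<^sup>L \<mu> (lf w)) + ennreal (emp_loss lf n M0 s) + ennreal B
          = ennreal (integral\<^sup>L \<mu> (lf w) + emp_loss lf n M0 s + B)"
        using Lmu_nonneg[of w] e0[of M0] B0 by (simp add: ennreal_plus)
      also have "\<dots> = ennreal (emp_loss lf n w s + LM0 + (\<Sum>k\<in>{1..d}. FF k w s + 2 * aa k))"
        using ident[OF wT s] by (simp add: B_def LM0_def)
      also have "\<dots> = ennreal (emp_loss lf n w s) + ennreal LM0 + (\<Sum>k\<in>{1..d}. ennreal (FF k w s + 2 * aa k))"
      proof -
        have S0: "0 \<le> (\<Sum>k\<in>{1..d}. FF k w s + 2 * aa k)" using FFn by (intro sum_nonneg) auto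
        have SE: "(\<Sum>k\<in>{1..d}. ennreal (FF k w s + 2 * aa k)) = ennreal (\<Sum>k\<in>{1..d}. FF k w s + 2 * aa k)"
          using FFn by (intro sum_ennreal) auto
        show ?thesis unfolding SE using e0[of w] L0 S0 by simp
      qed
      finally show ?thesis .
    qed
    have "R1 s + ennreal (emp_loss lf n M0 s) + ennreal B
        = (\<integral>\<^sup>+ w. ennreal (integral\<^sup>L \<mu> (lf w)) + ennreal (emp_loss lf n M0 s) + ennreal B \<partial>P s)"
      unfolding R1_def by (simp add: nn_integral_add measure_pmf.emeasure_space_1)
    also have "\<dots> = (\<integral>\<^sup>+ w. ennreal (emp_loss lf n w s) + ennreal LM0 + (\<Sum>k\<in>{1..d}. ennreal (FF k w s + 2 * aa k)) \<partial>P s)"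
      using pt by (intro nn_integral_cong_AE AE_pmfI) auto
    also have "\<dots> = E1 s + ennreal LM0 + (\<Sum>k\<in>{1..d}. Z k s)"
      unfolding E1_def Z_def by (simp add: nn_integral_add nn_integral_sum measure_pmf.emeasure_space_1)
    finally show ?thesis .
  qed
  have R1m: "R1 \<in> borel_measurable SM" unfolding R1_def[abs_def] by (rule adm_int_meas[OF adm]) simp
  have E1m: "E1 \<in> borel_measurable SM" unfolding E1_def[abs_def]
    by (rule adm_int_meas[OF adm]) (use emp_meas TT_Tb in auto)
  have Zm: "Z k \<in> borel_measurable SM" if k: "k \<in> {1..d}" for k
  proof -
    have "(\<lambda>s. ennreal (FF k w s + 2 * aa k)) \<in> borel_measurable SM" if "w \<in> TT" for w
    proof -
      have "good k w" using good_T[OF that] k by auto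
      then have [measurable]: "(\<lambda>s. FF k w s) \<in> borel_measurable SM" using FF_meas[OF k] by blast
      show ?thesis by measurable
    qed
    then show ?thesis unfolding Z_def[abs_def] by (intro adm_int_meas[OF adm]) auto
  qed
  have M0m: "(\<lambda>s. ennreal (emp_loss lf n M0 s)) \<in> borel_measurable SM"
    using emp_meas[OF M0_Tb] by measurable
  have risk_eq: "risk lf \<mu> n P = integral\<^sup>N SM R1"
    unfolding risk_def R1_def
    by (intro nn_integral_cong nn_integral_cong_AE AE_pmfI)
       (use adm_supp[OF adm] TT_Tb pop_eq in blast)
  have "integral\<^sup>N SM R1 + ennreal LM0 + ennreal B
      = (\<integral>\<^sup>+ s. R1 s + ennreal (emp_loss lf n M0 s) + ennreal B \<partial>SM)"
    using R1m M0m emp_int[OF M0_Tb] pop_eq[OF M0_Tb]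
    by (simp add: nn_integral_add SMp.emeasure_space_1 LM0_def)
  also have "\<dots> = (\<integral>\<^sup>+ s. E1 s + ennreal LM0 + (\<Sum>k\<in>{1..d}. Z k s) \<partial>SM)"
    by (intro nn_integral_cong eqs)
  also have "\<dots> = exp_emp_loss lf \<mu> n P + ennreal LM0 + (\<Sum>k\<in>{1..d}. integral\<^sup>N SM (Z k))"
  proof -
    have ZS: "(\<integral>\<^sup>+ s. (\<Sum>k\<in>{1..d}. Z k s) \<partial>SM) = (\<Sum>k\<in>{1..d}. integral\<^sup>N SM (Z k))"
      by (rule nn_integral_sum) (use Zm in auto)
    have ZSm: "(\<lambda>s. \<Sum>k\<in>{1..d}. Z k s) \<in> borel_measurable SM"
      by (rule borel_measurable_sum) (use Zm in auto)
    have "(\<integral>\<^sup>+ s. E1 s + ennreal LM0 + (\<Sum>k\<in>{1..d}. Z k s) \<partial>SM)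
        = (\<integral>\<^sup>+ s. E1 s + ennreal LM0 \<partial>SM) + (\<integral>\<^sup>+ s. (\<Sum>k\<in>{1..d}. Z k s) \<partial>SM)"
      using E1m ZSm by (intro nn_integral_add) auto
    also have "(\<integral>\<^sup>+ s. E1 s + ennreal LM0 \<partial>SM) = integral\<^sup>N SM E1 + ennreal LM0"
      using E1m by (simp add: nn_integral_add SMp.emeasure_space_1)
    finally show ?thesis unfolding ZS by (simp add: exp_emp_loss_def E1_def[abs_def])
  qed
  also have "\<dots> \<le> exp_emp_loss lf \<mu> n P + ennreal LM0 + (\<Sum>k\<in>{1..d}. ennreal (1 / lamf k) * cond_KL \<mu> n k P (Q k)
          + ennreal ((lamf k)\<^sup>2 * (aa k)\<^sup>2 / (2 * real n) / lamf k + 2 * aa k))"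
  proof (intro add_mono order_refl sum_mono)
    fix k assume k: "k \<in> {1..d}"
    have Zk: "Z k = (\<lambda>s. \<integral>\<^sup>+ w. ennreal (FF k w s + 2 * aa k) \<partial>P s)" by (simp add: Z_def fun_eq_iff)
    show "integral\<^sup>N SM (Z k) \<le> ennreal (1 / lamf k) * cond_KL \<mu> n k P (Q k)
          + ennreal ((lamf k)\<^sup>2 * (aa k)\<^sup>2 / (2 * real n) / lamf k + 2 * aa k)"
      unfolding Zk using perk[OF adm k, of "lamf k"] lam k by blast
  qed
  also have "(\<Sum>k\<in>{1..d}. ennreal (1 / lamf k) * cond_KL \<mu> n k P (Q k)
          + ennreal ((lamf k)\<^sup>2 * (aa k)\<^sup>2 / (2 * real n) / lamf k + 2 * aa k))
      = (\<Sum>k\<in>{1..d}. ennreal (1 / lamf k) * cond_KL \<mu> n k P (Q k)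
          + ennreal ((lamf k)\<^sup>2 * (aa k)\<^sup>2 / (2 * real n) / lamf k)) + ennreal B"
  proof -
    have "(\<Sum>k\<in>{1..d}. ennreal (1 / lamf k) * cond_KL \<mu> n k P (Q k)
          + ennreal ((lamf k)\<^sup>2 * (aa k)\<^sup>2 / (2 * real n) / lamf k + 2 * aa k))
       = (\<Sum>k\<in>{1..d}. (ennreal (1 / lamf k) * cond_KL \<mu> n k P (Q k)
          + ennreal ((lamf k)\<^sup>2 * (aa k)\<^sup>2 / (2 * real n) / lamf k)) + ennreal (2 * aa k))"
      using lam aa_pos by (intro sum.cong refl) (simp add: ennreal_plus add.assoc less_imp_le)
    also have "\<dots> = (\<Sum>k\<in>{1..d}. ennreal (1 / lamf k) * cond_KL \<mu> n k P (Q k)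
          + ennreal ((lamf k)\<^sup>2 * (aa k)\<^sup>2 / (2 * real n) / lamf k)) + ennreal B"
    proof -
      have "(\<Sum>k\<in>{1..d}. ennreal (2 * aa k)) = ennreal B"
        unfolding B_def by (intro sum_ennreal) (use aa_pos in \<open>auto intro: less_imp_le\<close>)
      then show ?thesis by (simp add: sum.distrib)
    qed
    finally show ?thesis .
  qed
  finally have "(ennreal LM0 + ennreal B) + risk lf \<mu> n P \<le> (ennreal LM0 + ennreal B) + (exp_emp_loss lf \<mu> n P
     + (\<Sum>k\<in>{1..d}. ennreal (1 / lamf k) * cond_KL \<mu> n k P (Q k)
          + ennreal ((lamf k)\<^sup>2 * (aa k)\<^sup>2 / (2 * real n) / lamf k)))"
    unfolding risk_eq by (simp add: add_ac)
  then show ?thesis by (simp add: ennreal_add_left_cancel_le)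
qed

end

end

lemma alg:
  fixes L b M R g sn s2 N :: real
  assumes "sn * sn = N" "0 < sn" "s2 * s2 = 2" "0 < s2" "0 < L" "0 < b" "0 < M" "0 < R" "0 < g"
  shows "(L * (b * M) * R)\<^sup>2 / (2 * N * ((L * M * R * s2 / sn) * (b * g)))
       = (L * M * R * s2 / sn) * (b * (1 / (4 * g)))"
proof -
  have h: "s2 * (s2 * x) = 2 * x" for x using assms(3) by (simp add: mult.assoc[symmetric])
  have "(L * (b * M) * R)\<^sup>2 / (2 * N * ((L * M * R * s2 / sn) * (b * g))) = (L * b * M * R) / (2 * sn * s2 * g)"
    unfolding assms(1)[symmetric] using assms(2-9) by (simp add: field_simps power2_eq_square)
  also have "\<dots> = (L * b * M * R) * (s2 * s2) / (4 * sn * s2 * g)"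
    using assms by (simp add: field_simps)
  also have "\<dots> = (L * M * R * s2 / sn) * (b * (1 / (4 * g)))"
    using assms by (simp add: field_simps)
  finally show ?thesis .
qed

context nnset begin

abbreviation "C0 \<equiv> Lc * Mp * R * sqrt 2"

lemma adm_delta: "admissible d Ws \<mu> n (\<lambda>s. return_pmf what)"
  by (simp add: admissible_def what_in)

lemma gibbs_delta:
  "gibbs_objective C0 d \<alpha> \<gamma> Q lf \<mu> n (\<lambda>s. return_pmf what)
   = pop_loss lf \<mu> what + ennreal (C0 / sqrt (real n))
       * (\<Sum>k\<in>{1..d}. ennreal (nn_beta \<alpha> k * \<gamma> k) * neglog (pmf (Q k) (nn_prefix k what)))"
proof -
  interpret SMp: prob_space SM by (rule prob_SM)
  have e: "exp_emp_loss lf \<mu> n (\<lambda>s. return_pmf what) = pop_loss lf \<mu> what"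
    unfolding exp_emp_loss_def by (simp add: nn_integral_return_pmf emp_int[OF TT_Tb[OF what_in]])
  have c: "cond_KL \<mu> n k (\<lambda>s. return_pmf what) (Q k) = neglog (pmf (Q k) (nn_prefix k what))" for k
    unfolding cond_KL_def by (simp add: KL_return SMp.emeasure_space_1)
  show ?thesis unfolding gibbs_objective_def e c ..
qed

lemma C0_pos: "0 < C0" using Lpos Mp_pos Rpos by simp

theorem final:
  "risk lf \<mu> n Pstar \<le> (INF w\<in>TT. pop_loss lf \<mu> w)
     + ennreal (C0 / sqrt (real n))
       * (\<Sum>k\<in>{1..d}. ennreal (nn_beta \<alpha> k)
            * (ennreal (\<gamma> k) * neglog (pmf (Q k) (nn_prefix k what)) + ennreal (1 / (4 * \<gamma> k))))"
proof -
  have INF: "pop_loss lf \<mu> what \<le> (INF w\<in>TT. pop_loss lf \<mu> w)"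
    using what_min by (intro INF_greatest) auto
  show ?thesis
  proof (cases "pop_loss lf \<mu> what < \<infinity>")
    case False
    then have w: "pop_loss lf \<mu> what = \<infinity>" by (metis infinity_ennreal_def less_top)
    then have "(INF w\<in>TT. pop_loss lf \<mu> w) = \<infinity>" using INF by (metis infinity_ennreal_def top_unique)
    then show ?thesis by simp
  next
    case True
    define K where "K = C0 / sqrt (real n)"
    have K0: "0 < K" unfolding K_def using C0_pos npos by simp
    define \<theta> where "\<theta> k = K * (nn_beta \<alpha> k * \<gamma> k)" for k
    define \<rho> where "\<rho> k = K * (nn_beta \<alpha> k * (1 / (4 * \<gamma> k)))" for k
    define lamf where "lamf k = 1 / \<theta> k" for k
    have th0: "0 < \<theta> k" if "k \<in> {1..d}" for k
      unfolding \<theta>_def using K0 beta_pos[OF that] gpos that by simp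
    have lam: "\<forall>k\<in>{1..d}. 0 < lamf k" using th0 by (simp add: lamf_def)
    have t1: "ennreal (1 / lamf k) = ennreal K * ennreal (nn_beta \<alpha> k * \<gamma> k)" if "k \<in> {1..d}" for k
      using K0 by (simp add: lamf_def \<theta>_def ennreal_mult')
    have t2: "(lamf k)\<^sup>2 * (aa k)\<^sup>2 / (2 * real n) / lamf k = \<rho> k" if k: "k \<in> {1..d}" for k
    proof -
      have b0: "0 < nn_beta \<alpha> k" using beta_pos[OF k] .
      have g0: "0 < \<gamma> k" using gpos k by auto
      have "(lamf k)\<^sup>2 * (aa k)\<^sup>2 / (2 * real n) / lamf k = (aa k)\<^sup>2 / (2 * real n * \<theta> k)"
        using th0[OF k] by (simp add: lamf_def power2_eq_square field_simps)
      also have "\<dots> = \<rho> k"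
        unfolding \<rho>_def \<theta>_def K_def aa_def
        by (rule alg) (use npos b0 g0 Lpos Mp_pos Rpos in auto)
      finally show ?thesis .
    qed
    have "risk lf \<mu> n Pstar \<le> exp_emp_loss lf \<mu> n Pstar
       + (\<Sum>k\<in>{1..d}. ennreal (1 / lamf k) * cond_KL \<mu> n k Pstar (Q k)
          + ennreal ((lamf k)\<^sup>2 * (aa k)\<^sup>2 / (2 * real n) / lamf k))"
      by (rule main_bound[OF True Pstar_adm lam])
    also have "(\<Sum>k\<in>{1..d}. ennreal (1 / lamf k) * cond_KL \<mu> n k Pstar (Q k)
          + ennreal ((lamf k)\<^sup>2 * (aa k)\<^sup>2 / (2 * real n) / lamf k))
       = ennreal K * (\<Sum>k\<in>{1..d}. ennreal (nn_beta \<alpha> k * \<gamma> k) * cond_KL \<mu> n k Pstar (Q k))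
         + (\<Sum>k\<in>{1..d}. ennreal (\<rho> k))"
      using t1 t2 by (simp add: sum.distrib sum_distrib_left mult.assoc)
    also have "exp_emp_loss lf \<mu> n Pstar + (ennreal K * (\<Sum>k\<in>{1..d}. ennreal (nn_beta \<alpha> k * \<gamma> k) * cond_KL \<mu> n k Pstar (Q k))
         + (\<Sum>k\<in>{1..d}. ennreal (\<rho> k)))
       = gibbs_objective C0 d \<alpha> \<gamma> Q lf \<mu> n Pstar + (\<Sum>k\<in>{1..d}. ennreal (\<rho> k))"
      unfolding gibbs_objective_def K_def by (simp add: add.assoc)
    also have "\<dots> \<le> gibbs_objective C0 d \<alpha> \<gamma> Q lf \<mu> n (\<lambda>s. return_pmf what) + (\<Sum>k\<in>{1..d}. ennreal (\<rho> k))"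
      using Pstar_min adm_delta by (intro add_mono) auto
    also have "\<dots> = pop_loss lf \<mu> what + (ennreal K
       * (\<Sum>k\<in>{1..d}. ennreal (nn_beta \<alpha> k * \<gamma> k) * neglog (pmf (Q k) (nn_prefix k what)))
       + (\<Sum>k\<in>{1..d}. ennreal (\<rho> k)))"
      unfolding gibbs_delta K_def by (simp add: add.assoc)
    also have "ennreal K
       * (\<Sum>k\<in>{1..d}. ennreal (nn_beta \<alpha> k * \<gamma> k) * neglog (pmf (Q k) (nn_prefix k what)))
       + (\<Sum>k\<in>{1..d}. ennreal (\<rho> k))
      = ennreal K * (\<Sum>k\<in>{1..d}. ennreal (nn_beta \<alpha> k)
            * (ennreal (\<gamma> k) * neglog (pmf (Q k) (nn_prefix k what)) + ennreal (1 / (4 * \<gamma> k))))"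
    proof -
      have r: "ennreal (\<rho> k) = ennreal K * (ennreal (nn_beta \<alpha> k) * ennreal (1 / (4 * \<gamma> k)))"
        if "k \<in> {1..d}" for k
      proof -
        have "ennreal (\<rho> k) = ennreal K * ennreal (nn_beta \<alpha> k * (1 / (4 * \<gamma> k)))"
          unfolding \<rho>_def using K0 by (intro ennreal_mult') simp
        also have "ennreal (nn_beta \<alpha> k * (1 / (4 * \<gamma> k))) = ennreal (nn_beta \<alpha> k) * ennreal (1 / (4 * \<gamma> k))"
          using beta_pos[OF that] by (intro ennreal_mult') simp
        finally show ?thesis .
      qed
      have b: "ennreal (nn_beta \<alpha> k * \<gamma> k) = ennreal (nn_beta \<alpha> k) * ennreal (\<gamma> k)"
        if "k \<in> {1..d}" for k
        using beta_pos[OF that] gpos that by (simp add: ennreal_mult')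
      show ?thesis
        using r b by (simp add: sum.distrib sum_distrib_left distrib_left mult.assoc)
    qed
    also have "pop_loss lf \<mu> what + ennreal K * (\<Sum>k\<in>{1..d}. ennreal (nn_beta \<alpha> k)
            * (ennreal (\<gamma> k) * neglog (pmf (Q k) (nn_prefix k what)) + ennreal (1 / (4 * \<gamma> k))))
       \<le> (INF w\<in>TT. pop_loss lf \<mu> w) + ennreal K * (\<Sum>k\<in>{1..d}. ennreal (nn_beta \<alpha> k)
            * (ennreal (\<gamma> k) * neglog (pmf (Q k) (nn_prefix k what)) + ennreal (1 / (4 * \<gamma> k))))"
      using INF by (rule add_right_mono)
    finally show ?thesis unfolding K_def .
  qed
qed

end

theorem theorem2:
  fixes d m n :: nat and \<delta> :: "nat \<Rightarrow> nat" and R Lc :: real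
    and Mm :: "nat \<Rightarrow> mat" and \<alpha> \<gamma> :: "nat \<Rightarrow> real"
    and \<phi> \<phi>o :: "nat \<Rightarrow> vec \<Rightarrow> vec"
    and lf :: "weights \<Rightarrow> vec \<times> 'y \<Rightarrow> real" and \<mu> :: "(vec \<times> 'y) measure"
    and Ws :: "nat \<Rightarrow> mat set" and Q :: "nat \<Rightarrow> weights pmf"
    and Pstar :: "(nat \<Rightarrow> vec \<times> 'y) \<Rightarrow> weights pmf" and what :: weights
  assumes d2: "d \<ge> 2"
    and dims: "\<forall>j\<in>{1..d}. \<delta> j > 0" and dim0: "\<delta> 0 = m" and mpos: "m > 0"
    and Rpos: "R > 0"
    and Mj: "\<forall>j\<in>{1..d}. Mm j \<in> nn_mats (\<delta> j) (\<delta> (j - 1))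
                \<and> nn_specnorm (\<delta> j) (\<delta> (j - 1)) (Mm j) > 0 \<and> \<alpha> j > 0"
    and phi_lip: "\<forall>k x y. nn_vnorm k (\<lambda>i. \<phi> k x i - \<phi> k y i) \<le> nn_vnorm k (\<lambda>i. x i - y i)"
    and phi0: "\<forall>k. \<forall>i<k. \<phi> k (\<lambda>_. 0) i = 0"
    and phio: "\<phi>o = (\<lambda>k x. x) \<or> \<phi>o = nn_softmax"
    and Lpos: "Lc > 0"
    and loss_nonneg: "\<forall>w z. 0 \<le> lf w z"
    and loss_lip: "\<forall>w\<in>nn_tuples d (\<lambda>j. nn_ball (\<delta> j) (\<delta> (j - 1)) (Mm j) (\<alpha> j)).
                   \<forall>w'\<in>nn_tuples d (\<lambda>j. nn_ball (\<delta> j) (\<delta> (j - 1)) (Mm j) (\<alpha> j)).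
                   \<forall>x y. nn_vnorm m x \<le> R \<longrightarrow>
                     \<bar>lf w (x, y) - lf w' (x, y)\<bar>
                       \<le> Lc * nn_vnorm (\<delta> d) (\<lambda>i. nn_net d \<delta> \<phi> \<phi>o w x i - nn_net d \<delta> \<phi> \<phi>o w' x i)"
    and prob: "prob_space \<mu>"
    and supp: "space \<mu> \<subseteq> {x. nn_vnorm m x \<le> R} \<times> UNIV"
    and loss_meas: "\<forall>w\<in>nn_tuples d (\<lambda>j. nn_ball (\<delta> j) (\<delta> (j - 1)) (Mm j) (\<alpha> j)).
                      (\<lambda>z. lf w z) \<in> borel_measurable \<mu>"
    and npos: "n \<ge> 1"
    and Ws: "\<forall>k\<in>{1..d}. countable (Ws k) \<and> Ws k \<subseteq> nn_ball (\<delta> k) (\<delta> (k - 1)) (Mm k) (\<alpha> k)"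
    and Qsupp: "\<forall>k\<in>{1..d}. set_pmf (Q k) \<subseteq> nn_prefix k ` nn_tuples d Ws"
    and gpos: "\<forall>k\<in>{1..d}. \<gamma> k > 0"
    and Pstar_adm: "admissible d Ws \<mu> n Pstar"
    and Pstar_min: "\<forall>P. admissible d Ws \<mu> n P \<longrightarrow>
        gibbs_objective (Lc * (\<Prod>j\<in>{1..d}. nn_specnorm (\<delta> j) (\<delta> (j - 1)) (Mm j)) * R * sqrt 2)
           d \<alpha> \<gamma> Q lf \<mu> n Pstar
        \<le> gibbs_objective (Lc * (\<Prod>j\<in>{1..d}. nn_specnorm (\<delta> j) (\<delta> (j - 1)) (Mm j)) * R * sqrt 2)
           d \<alpha> \<gamma> Q lf \<mu> n P"
    and what_in: "what \<in> nn_tuples d Ws"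
    and what_min: "\<forall>w\<in>nn_tuples d Ws. pop_loss lf \<mu> what \<le> pop_loss lf \<mu> w"
  shows "risk lf \<mu> n Pstar \<le> (INF w\<in>nn_tuples d Ws. pop_loss lf \<mu> w)
     + ennreal (Lc * (\<Prod>j\<in>{1..d}. nn_specnorm (\<delta> j) (\<delta> (j - 1)) (Mm j)) * R * sqrt 2
                / sqrt (real n))
       * (\<Sum>k\<in>{1..d}. ennreal (nn_beta \<alpha> k)
            * (ennreal (\<gamma> k) * neglog (pmf (Q k) (nn_prefix k what)) + ennreal (1 / (4 * \<gamma> k))))"
proof -
  interpret nnset d m n \<delta> R Lc Mm \<alpha> \<gamma> \<phi> \<phi>o lf \<mu> Ws Q Pstar what
    by (rule nnset.intro) (rule assms)+
  show ?thesis by (rule final)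
qed

end
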